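(* Let $(L,G,\mathcal D)$ be an abelian Chaplygin nonholonomic system as described in the context, with constraints $\phi^a(q,\dot q)=\dot s^a+A^a_\alpha(r)\dot r^\alpha=0$, $a=1,\dots,k<n$, where $q=(r,s)$. Suppose a nowhere-zero $f(r)\in C^1$ has been found satisfying $$\frac{\partial f}{\partial r^\delta}G_{\alpha\nu}+\frac{\partial f}{\partial r^\nu}G_{\alpha\delta}-2\frac{\partial f}{\partial r^\alpha}G_{\delta\nu}=f\big(K^\mu_{\alpha\delta}G_{\mu\nu}+K^\mu_{\alpha\nu}G_{\mu\delta}\big)\quad\text{for all }\alpha,\nu,\delta,$$ and let $\mathcal L(q,\omega):=L(q,\dot q=f\omega)$ and $\phi^a(q,\omega):=\phi^a(q,\dot q=f\omega)$. If the matrix $\widetilde g_{ab}:=\partial^2\mathcal L/\partial\omega^a\partial\omega^b$ (second derivatives with respect to the $s$-components of $\omega$) is invertible, then the nonholonomic mechanics of the original system can be derived from the equations $$\frac{d}{dt}\frac{\partial\mathcal L_V}{\partial\omega^I}-f\frac{\partial\mathcal L_V}{\partial q^I}=0,\qquad I=1,\dots,n,$$ with $\dot q=f\omega$, using the Lagrangian $$\mathcal L_V(q,\omega)=\mathcal L(q,\omega)-\frac1f\frac{\partial\mathcal L}{\partial\omega^a}\phi^a(q,\omega),$$ and imposing the nonholonomic constraints $\phi^a=0$ on the initial conditions.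
   Context: An abelian Chaplygin nonholonomic system: $Q$ of dimension $n$ with local coordinates $q=(r^\alpha,s^a)$, $\alpha=1,\dots,m=n-k$, $a=1,\dots,k$, a mechanical Lagrangian $L(r,\dot r,\dot s)$ not depending on $s$ (invariant under the abelian group $G$ acting by translations in $s$), and linear constraints $\dot s^a=-A^a_\alpha(r)\dot r^\alpha$; its nonholonomic mechanics are the Lagrange–d'Alembert equations for $L$ with these constraints. Write $g_{\alpha\beta},g_{a\alpha},g_{ab}$ for the coefficients of the kinetic energy in $L$ (so $L=\tfrac12g_{\alpha\beta}\dot r^\alpha\dot r^\beta+g_{a\alpha}\dot r^\alpha\dot s^a+\tfrac12g_{ab}\dot s^a\dot s^b-V(r)$). The constrained Lagrangian is $l_c(r,\dot r)=L(r,\dot r,-A\dot r)$; $G_{\alpha\beta}=\partial^2l_c/\partial\dot r^\alpha\partial\dot r^\beta$, assumed invertible with inverse $G^{\alpha\beta}$; $\mathcal B^a_{\alpha\beta}=\partial A^a_\alpha/\partial r^\beta-\partial A^a_\beta/\partial r^\alpha$; $M_{a\alpha}=g_{a\alpha}-g_{ab}A^b_\alpha$; $K^\gamma_{\beta\alpha}=M_{b\epsilon}G^{\epsilon\gamma}\mathcal B^b_{\beta\alpha}$. Quasivelocities $\omega$ are defined by $\dot q=f(r)\omega$ (componentwise for all $n$ coordinates); the time reparameterization is $d\tau=f\,dt$. Summation convention. *)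

theory Defs
  imports "HOL-Analysis.Analysis"
begin

text \<open>Configuration space Q = R^m x R^k, coordinates q = (r,s) indexed by the sum type
  'm + 'k: q $ Inl alpha = r^alpha, q $ Inr a = s^a.\<close>

definition rpart :: "real^('m::finite + 'k::finite) \<Rightarrow> real^'m" where
  "rpart q = (\<chi> \<alpha>. q $ Inl \<alpha>)"

definition joinv :: "real^'m::finite \<Rightarrow> real^'k::finite \<Rightarrow> real^('m + 'k)" where
  "joinv r s = (\<chi> I. case I of Inl \<alpha> \<Rightarrow> r $ \<alpha> | Inr a \<Rightarrow> s $ a)"

definition pd :: "(real^'i::finite \<Rightarrow> real) \<Rightarrow> real^'i \<Rightarrow> 'i \<Rightarrow> real" where
  "pd F x i = deriv (\<lambda>h. F (x + h *\<^sub>R axis i 1)) 0"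

fun Ck :: "nat \<Rightarrow> (real^'i::finite \<Rightarrow> real) \<Rightarrow> bool" where
  "Ck 0 F = continuous_on UNIV F"
| "Ck (Suc k) F = ((\<forall>x. F differentiable (at x)) \<and> (\<forall>i. Ck k (\<lambda>x. pd F x i)))"

definition smooth_fun :: "(real^'i::finite \<Rightarrow> real) \<Rightarrow> bool" where
  "smooth_fun F = (\<forall>k. Ck k F)"

definition mechL ::
  "(real^'m \<Rightarrow> 'm \<Rightarrow> 'm \<Rightarrow> real) \<Rightarrow> (real^'m \<Rightarrow> 'k \<Rightarrow> 'm \<Rightarrow> real) \<Rightarrow>
   (real^'m \<Rightarrow> 'k \<Rightarrow> 'k \<Rightarrow> real) \<Rightarrow> (real^'m \<Rightarrow> real) \<Rightarrow>
   real^('m::finite + 'k::finite) \<Rightarrow> real^('m + 'k) \<Rightarrow> real" where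
  "mechL grr gsr gss V q v =
     (1/2) * (\<Sum>\<alpha>\<in>UNIV. \<Sum>\<beta>\<in>UNIV. grr (rpart q) \<alpha> \<beta> * v $ Inl \<alpha> * v $ Inl \<beta>)
   + (\<Sum>a\<in>UNIV. \<Sum>\<alpha>\<in>UNIV. gsr (rpart q) a \<alpha> * v $ Inl \<alpha> * v $ Inr a)
   + (1/2) * (\<Sum>a\<in>UNIV. \<Sum>b\<in>UNIV. gss (rpart q) a b * v $ Inr a * v $ Inr b)
   - V (rpart q)"

definition phi :: "(real^'m \<Rightarrow> 'k \<Rightarrow> 'm \<Rightarrow> real) \<Rightarrow> real^('m::finite + 'k::finite) \<Rightarrow>
   real^('m + 'k) \<Rightarrow> 'k \<Rightarrow> real" where
  "phi A q v a = v $ Inr a + (\<Sum>\<alpha>\<in>UNIV. A (rpart q) a \<alpha> * v $ Inl \<alpha>)"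

definition lc ::
  "(real^'m \<Rightarrow> 'm \<Rightarrow> 'm \<Rightarrow> real) \<Rightarrow> (real^'m \<Rightarrow> 'k::finite \<Rightarrow> 'm \<Rightarrow> real) \<Rightarrow>
   (real^'m \<Rightarrow> 'k \<Rightarrow> 'k \<Rightarrow> real) \<Rightarrow> (real^'m \<Rightarrow> real) \<Rightarrow>
   (real^'m \<Rightarrow> 'k \<Rightarrow> 'm \<Rightarrow> real) \<Rightarrow> real^'m::finite \<Rightarrow> real^'m \<Rightarrow> real" where
  "lc grr gsr gss V A r u =
     mechL grr gsr gss V (joinv r (0::real^'k))
       (joinv u (\<chi> a. - (\<Sum>\<beta>\<in>UNIV. A r a \<beta> * u $ \<beta>)))"

text \<open>G_{alpha beta} = d^2 l_c / d rdot^alpha d rdot^beta (l_c is quadratic in rdot, so the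
  Hessian does not depend on rdot; we evaluate it at rdot = 0).\<close>
definition Gmat ::
  "(real^'m \<Rightarrow> 'm \<Rightarrow> 'm \<Rightarrow> real) \<Rightarrow> (real^'m \<Rightarrow> 'k \<Rightarrow> 'm \<Rightarrow> real) \<Rightarrow>
   (real^'m \<Rightarrow> 'k::finite \<Rightarrow> 'k \<Rightarrow> real) \<Rightarrow> (real^'m \<Rightarrow> real) \<Rightarrow>
   (real^'m \<Rightarrow> 'k \<Rightarrow> 'm \<Rightarrow> real) \<Rightarrow> real^'m::finite \<Rightarrow> real^'m^'m" where
  "Gmat grr gsr gss V A r =
     (\<chi> \<alpha> \<beta>. pd (\<lambda>u. pd (lc grr gsr gss V A r) u \<alpha>) 0 \<beta>)"

definition Bcurv :: "(real^'m::finite \<Rightarrow> 'k \<Rightarrow> 'm \<Rightarrow> real) \<Rightarrow> real^'m \<Rightarrow> 'k \<Rightarrow> 'm \<Rightarrow> 'm \<Rightarrow> real" where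
  "Bcurv A r a \<alpha> \<beta> = pd (\<lambda>x. A x a \<alpha>) r \<beta> - pd (\<lambda>x. A x a \<beta>) r \<alpha>"

definition Mmat :: "(real^'m \<Rightarrow> 'k \<Rightarrow> 'm \<Rightarrow> real) \<Rightarrow> (real^'m \<Rightarrow> 'k::finite \<Rightarrow> 'k \<Rightarrow> real) \<Rightarrow>
   (real^'m \<Rightarrow> 'k \<Rightarrow> 'm \<Rightarrow> real) \<Rightarrow> real^'m::finite \<Rightarrow> 'k \<Rightarrow> 'm \<Rightarrow> real" where
  "Mmat gsr gss A r a \<alpha> = gsr r a \<alpha> - (\<Sum>b\<in>UNIV. gss r a b * A r b \<alpha>)"

definition Kten ::
  "(real^'m \<Rightarrow> 'm \<Rightarrow> 'm \<Rightarrow> real) \<Rightarrow> (real^'m \<Rightarrow> 'k \<Rightarrow> 'm \<Rightarrow> real) \<Rightarrow>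
   (real^'m \<Rightarrow> 'k::finite \<Rightarrow> 'k \<Rightarrow> real) \<Rightarrow> (real^'m \<Rightarrow> real) \<Rightarrow>
   (real^'m \<Rightarrow> 'k \<Rightarrow> 'm \<Rightarrow> real) \<Rightarrow> real^'m::finite \<Rightarrow> 'm \<Rightarrow> 'm \<Rightarrow> 'm \<Rightarrow> real" where
  "Kten grr gsr gss V A r \<gamma> \<beta> \<alpha> =
     (\<Sum>b\<in>UNIV. \<Sum>\<epsilon>\<in>UNIV. Mmat gsr gss A r b \<epsilon> * matrix_inv (Gmat grr gsr gss V A r) $ \<epsilon> $ \<gamma>
                 * Bcurv A r b \<beta> \<alpha>)"

definition calL ::
  "(real^'m \<Rightarrow> 'm \<Rightarrow> 'm \<Rightarrow> real) \<Rightarrow> (real^'m \<Rightarrow> 'k \<Rightarrow> 'm \<Rightarrow> real) \<Rightarrow>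
   (real^'m \<Rightarrow> 'k \<Rightarrow> 'k \<Rightarrow> real) \<Rightarrow> (real^'m \<Rightarrow> real) \<Rightarrow> (real^'m \<Rightarrow> real) \<Rightarrow>
   real^('m::finite + 'k::finite) \<Rightarrow> real^('m + 'k) \<Rightarrow> real" where
  "calL grr gsr gss V f q \<omega> = mechL grr gsr gss V q (f (rpart q) *\<^sub>R \<omega>)"

definition phiw :: "(real^'m \<Rightarrow> 'k \<Rightarrow> 'm \<Rightarrow> real) \<Rightarrow> (real^'m \<Rightarrow> real) \<Rightarrow>
   real^('m::finite + 'k::finite) \<Rightarrow> real^('m + 'k) \<Rightarrow> 'k \<Rightarrow> real" where
  "phiw A f q \<omega> a = phi A q (f (rpart q) *\<^sub>R \<omega>) a"

text \<open>tilde g_{ab} = d^2 calL / d omega^a d omega^b (s-components; quadratic in omega, so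
  evaluated at omega = 0).\<close>
definition gtilde ::
  "(real^'m \<Rightarrow> 'm \<Rightarrow> 'm \<Rightarrow> real) \<Rightarrow> (real^'m \<Rightarrow> 'k \<Rightarrow> 'm \<Rightarrow> real) \<Rightarrow>
   (real^'m \<Rightarrow> 'k \<Rightarrow> 'k \<Rightarrow> real) \<Rightarrow> (real^'m \<Rightarrow> real) \<Rightarrow> (real^'m \<Rightarrow> real) \<Rightarrow>
   real^('m::finite + 'k::finite) \<Rightarrow> real^'k^'k" where
  "gtilde grr gsr gss V f q =
     (\<chi> a b. pd (\<lambda>w. pd (calL grr gsr gss V f q) w (Inr a)) 0 (Inr b))"

definition LV ::
  "(real^'m \<Rightarrow> 'm \<Rightarrow> 'm \<Rightarrow> real) \<Rightarrow> (real^'m \<Rightarrow> 'k \<Rightarrow> 'm \<Rightarrow> real) \<Rightarrow>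
   (real^'m \<Rightarrow> 'k \<Rightarrow> 'k \<Rightarrow> real) \<Rightarrow> (real^'m \<Rightarrow> real) \<Rightarrow>
   (real^'m \<Rightarrow> 'k \<Rightarrow> 'm \<Rightarrow> real) \<Rightarrow> (real^'m \<Rightarrow> real) \<Rightarrow>
   real^('m::finite + 'k::finite) \<Rightarrow> real^('m + 'k) \<Rightarrow> real" where
  "LV grr gsr gss V A f q \<omega> =
     calL grr gsr gss V f q \<omega>
     - (1 / f (rpart q)) * (\<Sum>a\<in>UNIV. pd (calL grr gsr gss V f q) \<omega> (Inr a) * phiw A f q \<omega> a)"

end

theory Submission
  imports Defs
begin

lemma pd_deriv: "((\<lambda>h. F (x + h *\<^sub>R axis i 1)) has_real_derivative D) (at 0) \<Longrightarrow> pd F x i = D"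
  by (simp add: pd_def DERIV_imp_deriv)

lemma comp_axis: "(v + h *\<^sub>R axis i 1) $ j = v $ j + h * axis i (1::real) $ j"
  by simp

lemma axis1: "axis i (1::real) $ j = (if j = i then 1 else 0)"
  by (simp add: axis_def)

lemma rpart_axis_Inl: "rpart (x + h *\<^sub>R axis (Inl \<alpha>) 1) = rpart x + h *\<^sub>R axis \<alpha> (1::real)"
  by (simp add: rpart_def axis_def vec_eq_iff)

lemma rpart_axis_Inr: "rpart (x + h *\<^sub>R axis (Inr a) (1::real)) = rpart x"
  by (simp add: rpart_def axis_def vec_eq_iff)

lemma dir_deriv_lin:
  fixes G :: "real^'i::finite \<Rightarrow> real"
  assumes G': "(G has_derivative G') (at y)"
  shows "((\<lambda>h. G (y + h *\<^sub>R axis i 1)) has_real_derivative G' (axis i 1)) (at 0)"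
proof -
  have lin: "linear G'" using G' has_derivative_linear by blast
  have d1: "((\<lambda>h::real. y + h *\<^sub>R axis i 1) has_derivative (\<lambda>h. h *\<^sub>R axis i 1)) (at 0)"
    by (auto intro!: derivative_eq_intros)
  have "((\<lambda>h. G (y + h *\<^sub>R axis i 1)) has_derivative (\<lambda>h. G' (h *\<^sub>R axis i 1))) (at 0)"
    using has_derivative_compose[OF d1, of G G'] G' by simp
  moreover have "(\<lambda>h. G' (h *\<^sub>R axis i 1)) = (*) (G' (axis i 1))"
    by (rule ext) (simp add: linear_scale[OF lin] mult.commute)
  ultimately show ?thesis unfolding has_field_derivative_def by simp
qed

lemma pd_has_deriv:
  fixes G :: "real^'i::finite \<Rightarrow> real"
  assumes "G differentiable (at y)"
  shows "((\<lambda>h. G (y + h *\<^sub>R axis i 1)) has_real_derivative pd G y i) (at 0)"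
proof -
  obtain G' where G': "(G has_derivative G') (at y)" using assms differentiable_def by blast
  from dir_deriv_lin[OF G'] pd_deriv[OF dir_deriv_lin[OF G']] show ?thesis by simp
qed

lemma frechet_pd:
  fixes G :: "real^'i::finite \<Rightarrow> real"
  assumes "G differentiable (at y)"
  shows "(G has_derivative (\<lambda>h. \<Sum>i\<in>UNIV. pd G y i * h $ i)) (at y)"
proof -
  obtain G' where G': "(G has_derivative G') (at y)" using assms differentiable_def by blast
  have lin: "linear G'" using G' has_derivative_linear by blast
  have pdG: "pd G y i = G' (axis i 1)" for i
    by (rule pd_deriv[OF dir_deriv_lin[OF G']])
  have "G' h = (\<Sum>i\<in>UNIV. pd G y i * h $ i)" for h
  proof -
    have "G' h = G' (\<Sum>i\<in>UNIV. h $ i *\<^sub>R axis i 1)"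
      using basis_expansion[of h] by (simp add: scalar_mult_eq_scaleR)
    also have "\<dots> = (\<Sum>i\<in>UNIV. h $ i * G' (axis i 1))"
      using lin by (simp add: linear_sum linear_scale)
    finally show ?thesis by (simp add: pdG mult.commute)
  qed
  then have "G' = (\<lambda>h. \<Sum>i\<in>UNIV. pd G y i * h $ i)" by auto
  with G' show ?thesis by simp
qed

lemma dquad:
  "((\<lambda>h::real. \<Sum>x\<in>X. \<Sum>y\<in>Y. c x y * (a x + h*e x) * (b y + h * d y)) has_real_derivative
    (\<Sum>x\<in>X. \<Sum>y\<in>Y. c x y * (e x * b y + a x * d y))) (at 0)"
  by (auto intro!: derivative_eq_intros simp: algebra_simps)

definition KE :: "(real^'m \<Rightarrow> 'm \<Rightarrow> 'm \<Rightarrow> real) \<Rightarrow> (real^'m \<Rightarrow> 'k \<Rightarrow> 'm \<Rightarrow> real) \<Rightarrow>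
   (real^'m \<Rightarrow> 'k \<Rightarrow> 'k \<Rightarrow> real) \<Rightarrow> real^'m::finite \<Rightarrow> real^('m + 'k::finite) \<Rightarrow> real" where
  "KE grr gsr gss r v =
     (1/2) * (\<Sum>\<alpha>\<in>UNIV. \<Sum>\<beta>\<in>UNIV. grr r \<alpha> \<beta> * v $ Inl \<alpha> * v $ Inl \<beta>)
   + (\<Sum>a\<in>UNIV. \<Sum>\<alpha>\<in>UNIV. gsr r a \<alpha> * v $ Inl \<alpha> * v $ Inr a)
   + (1/2) * (\<Sum>a\<in>UNIV. \<Sum>b\<in>UNIV. gss r a b * v $ Inr a * v $ Inr b)"

definition PP :: "(real^'m \<Rightarrow> 'm \<Rightarrow> 'm \<Rightarrow> real) \<Rightarrow> (real^'m \<Rightarrow> 'k \<Rightarrow> 'm \<Rightarrow> real) \<Rightarrow>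
   (real^'m \<Rightarrow> 'k \<Rightarrow> 'k \<Rightarrow> real) \<Rightarrow> real^'m::finite \<Rightarrow> real^('m + 'k::finite) \<Rightarrow> 'm + 'k \<Rightarrow> real" where
  "PP grr gsr gss r v I = (case I of
      Inl \<alpha> \<Rightarrow> (\<Sum>\<beta>\<in>UNIV. grr r \<alpha> \<beta> * v $ Inl \<beta>) + (\<Sum>a\<in>UNIV. gsr r a \<alpha> * v $ Inr a)
    | Inr a \<Rightarrow> (\<Sum>\<alpha>\<in>UNIV. gsr r a \<alpha> * v $ Inl \<alpha>) + (\<Sum>b\<in>UNIV. gss r a b * v $ Inr b))"

lemma dquad2:
  "((\<lambda>h::real. \<Sum>x\<in>X. \<Sum>y\<in>Y. c x y * (a y + h*e y) * (b x + h * d x)) has_real_derivative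
    (\<Sum>x\<in>X. \<Sum>y\<in>Y. c x y * (e y * b x + a y * d x))) (at 0)"
  by (auto intro!: derivative_eq_intros simp: algebra_simps)

lemma ifm1: "(if P then 1 else 0) * (x::real) = (if P then x else 0)" by simp
lemma ifm2: "(x::real) * (if P then 1 else 0) = (if P then x else 0)" by simp
lemma ifm3: "(c::real) * (if P then x else 0) = (if P then c * x else 0)" by simp
lemma ifsum: "(\<Sum>x\<in>S. if P then f x else (0::real)) = (if P then sum f S else 0)" by simp
lemmas ifm = ifm1 ifm2 ifm3 ifsum

lemma mechL_KE: "mechL grr gsr gss V q v = KE grr gsr gss (rpart q) v - V (rpart q)"
  by (simp add: mechL_def KE_def)

lemma KE_dir:
  assumes sg: "\<And>\<alpha> \<beta>. grr r \<alpha> \<beta> = grr r \<beta> \<alpha>" and ss: "\<And>a b. gss r a b = gss r b a"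
  shows "((\<lambda>h. KE grr gsr gss r (v + h *\<^sub>R axis I 1)) has_real_derivative PP grr gsr gss r v I) (at 0)"
proof -
  define e where "e J = axis I (1::real) $ J" for J
  have D: "((\<lambda>h. KE grr gsr gss r (v + h *\<^sub>R axis I 1)) has_real_derivative
     (1/2) * (\<Sum>\<alpha>\<in>UNIV. \<Sum>\<beta>\<in>UNIV. grr r \<alpha> \<beta> * (e (Inl \<alpha>) * v $ Inl \<beta> + v $ Inl \<alpha> * e (Inl \<beta>)))
   + (\<Sum>a\<in>UNIV. \<Sum>\<alpha>\<in>UNIV. gsr r a \<alpha> * (e (Inl \<alpha>) * v $ Inr a + v $ Inl \<alpha> * e (Inr a)))
   + (1/2) * (\<Sum>a\<in>UNIV. \<Sum>b\<in>UNIV. gss r a b * (e (Inr a) * v $ Inr b + v $ Inr a * e (Inr b)))) (at 0)"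
    unfolding KE_def comp_axis e_def[symmetric]
    by (intro DERIV_add DERIV_cmult dquad dquad2)
  have E: "(1/2) * (\<Sum>\<alpha>\<in>UNIV. \<Sum>\<beta>\<in>UNIV. grr r \<alpha> \<beta> * (e (Inl \<alpha>) * v $ Inl \<beta> + v $ Inl \<alpha> * e (Inl \<beta>)))
   + (\<Sum>a\<in>UNIV. \<Sum>\<alpha>\<in>UNIV. gsr r a \<alpha> * (e (Inl \<alpha>) * v $ Inr a + v $ Inl \<alpha> * e (Inr a)))
   + (1/2) * (\<Sum>a\<in>UNIV. \<Sum>b\<in>UNIV. gss r a b * (e (Inr a) * v $ Inr b + v $ Inr a * e (Inr b)))
   = PP grr gsr gss r v I"
  proof (cases I)
    case (Inl \<gamma>)
    have "(\<Sum>\<alpha>\<in>UNIV. \<Sum>\<beta>\<in>UNIV. grr r \<alpha> \<beta> * (e (Inl \<alpha>) * v $ Inl \<beta> + v $ Inl \<alpha> * e (Inl \<beta>)))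
       = (\<Sum>\<beta>\<in>UNIV. grr r \<gamma> \<beta> * v $ Inl \<beta>) + (\<Sum>\<alpha>\<in>UNIV. grr r \<alpha> \<gamma> * v $ Inl \<alpha>)"
      by (simp add: e_def axis1 Inl distrib_left sum.distrib ifm cong: if_cong)
    moreover have "(\<Sum>a\<in>UNIV. \<Sum>\<alpha>\<in>UNIV. gsr r a \<alpha> * (e (Inl \<alpha>) * v $ Inr a + v $ Inl \<alpha> * e (Inr a)))
       = (\<Sum>a\<in>UNIV. gsr r a \<gamma> * v $ Inr a)"
      by (simp add: e_def axis1 Inl ifm cong: if_cong)
    moreover have "(\<Sum>a\<in>UNIV. \<Sum>b\<in>UNIV. gss r a b * (e (Inr a) * v $ Inr b + v $ Inr a * e (Inr b))) = 0"
      by (simp add: e_def axis1 Inl)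
    ultimately show ?thesis by (simp add: PP_def Inl sg[of _ \<gamma>])
  next
    case (Inr c)
    have "(\<Sum>a\<in>UNIV. \<Sum>b\<in>UNIV. gss r a b * (e (Inr a) * v $ Inr b + v $ Inr a * e (Inr b)))
       = (\<Sum>b\<in>UNIV. gss r c b * v $ Inr b) + (\<Sum>a\<in>UNIV. gss r a c * v $ Inr a)"
      by (simp add: e_def axis1 Inr distrib_left sum.distrib ifm cong: if_cong)
    moreover have "(\<Sum>a\<in>UNIV. \<Sum>\<alpha>\<in>UNIV. gsr r a \<alpha> * (e (Inl \<alpha>) * v $ Inr a + v $ Inl \<alpha> * e (Inr a)))
       = (\<Sum>\<alpha>\<in>UNIV. gsr r c \<alpha> * v $ Inl \<alpha>)"
      by (simp add: e_def axis1 Inr ifm cong: if_cong)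
    moreover have "(\<Sum>\<alpha>\<in>UNIV. \<Sum>\<beta>\<in>UNIV. grr r \<alpha> \<beta> * (e (Inl \<alpha>) * v $ Inl \<beta> + v $ Inl \<alpha> * e (Inl \<beta>))) = 0"
      by (simp add: e_def axis1 Inr)
    ultimately show ?thesis by (simp add: PP_def Inr ss[of _ c])
  qed
  from D show ?thesis unfolding E .
qed

definition Phi :: "(real^'m \<Rightarrow> 'k \<Rightarrow> 'm \<Rightarrow> real) \<Rightarrow> real^'m::finite \<Rightarrow> real^('m + 'k::finite) \<Rightarrow> 'k \<Rightarrow> real" where
  "Phi A r v b = v $ Inr b + (\<Sum>\<alpha>\<in>UNIV. A r b \<alpha> * v $ Inl \<alpha>)"

lemma phi_Phi: "phi A q v b = Phi A (rpart q) v b"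
  by (simp add: phi_def Phi_def)

lemma Phi_add: "Phi A r (v + w) b = Phi A r v b + Phi A r w b"
  by (simp add: Phi_def algebra_simps sum.distrib)
lemma Phi_scale: "Phi A r (c *\<^sub>R v) b = c * Phi A r v b"
  by (simp add: Phi_def algebra_simps sum_distrib_left)
lemma PP_add: "PP grr gsr gss r (v + w) I = PP grr gsr gss r v I + PP grr gsr gss r w I"
  by (simp add: PP_def algebra_simps sum.distrib split: sum.split)
lemma PP_scale: "PP grr gsr gss r (c *\<^sub>R v) I = c * PP grr gsr gss r v I"
  by (simp add: PP_def algebra_simps sum_distrib_left split: sum.split)
lemma KE_scale: "KE grr gsr gss r (c *\<^sub>R v) = c^2 * KE grr gsr gss r v"
  by (simp add: KE_def algebra_simps sum_distrib_left power2_eq_square)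

lemma PP_axis_Inr: "PP grr gsr gss r (axis (Inr a) 1) (Inr b) = gss r b a"
  by (simp add: PP_def axis1 ifm)
lemma PP_axis_Inl: "PP grr gsr gss r (axis (Inl \<alpha>) 1) (Inr b) = gsr r b \<alpha>"
  by (simp add: PP_def axis1 ifm)
lemma Phi_axis_Inr: "Phi A r (axis (Inr a) 1) b = (if b = a then 1 else 0)"
  by (simp add: Phi_def axis1 ifm)
lemma Phi_axis_Inl: "Phi A r (axis (Inl \<alpha>) 1) b = A r b \<alpha>"
  by (simp add: Phi_def axis1 ifm)

lemma pd_mechL_v:
  assumes sg: "\<And>r \<alpha> \<beta>. grr r \<alpha> \<beta> = grr r \<beta> \<alpha>" and ss: "\<And>r a b. gss r a b = gss r b a"
  shows "pd (mechL grr gsr gss V q) v I = PP grr gsr gss (rpart q) v I"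
proof (rule pd_deriv)
  show "((\<lambda>h. mechL grr gsr gss V q (v + h *\<^sub>R axis I 1)) has_real_derivative PP grr gsr gss (rpart q) v I) (at 0)"
    unfolding mechL_KE using DERIV_diff[OF KE_dir[of grr "rpart q" gss gsr v I] DERIV_const[of "V (rpart q)"]] sg ss
    by simp
qed

lemma calL_KE: "calL grr gsr gss V f q w = (f (rpart q))^2 * KE grr gsr gss (rpart q) w - V (rpart q)"
  by (simp add: calL_def mechL_KE KE_scale)

lemma pd_calL:
  assumes sg: "\<And>r \<alpha> \<beta>. grr r \<alpha> \<beta> = grr r \<beta> \<alpha>" and ss: "\<And>r a b. gss r a b = gss r b a"
  shows "pd (calL grr gsr gss V f q) w I = (f (rpart q))^2 * PP grr gsr gss (rpart q) w I"
proof (rule pd_deriv)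
  show "((\<lambda>h. calL grr gsr gss V f q (w + h *\<^sub>R axis I 1)) has_real_derivative (f (rpart q))^2 * PP grr gsr gss (rpart q) w I) (at 0)"
    unfolding calL_KE using DERIV_diff[OF DERIV_cmult[OF KE_dir[of grr "rpart q" gss gsr w I]] DERIV_const[of "V (rpart q)"]] sg ss
    by simp
qed

lemma LV_explicit:
  assumes sg: "\<And>r \<alpha> \<beta>. grr r \<alpha> \<beta> = grr r \<beta> \<alpha>" and ss: "\<And>r a b. gss r a b = gss r b a"
    and fnz: "f (rpart q) \<noteq> 0"
  shows "LV grr gsr gss V A f q w = (f (rpart q))^2 * KE grr gsr gss (rpart q) w - V (rpart q)
     - (f (rpart q))^2 * (\<Sum>b\<in>UNIV. PP grr gsr gss (rpart q) w (Inr b) * Phi A (rpart q) w b)"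
proof -
  have "(1 / f (rpart q)) * (\<Sum>b\<in>UNIV. pd (calL grr gsr gss V f q) w (Inr b) * phiw A f q w b)
     = (f (rpart q))^2 * (\<Sum>b\<in>UNIV. PP grr gsr gss (rpart q) w (Inr b) * Phi A (rpart q) w b)"
    using fnz by (simp add: pd_calL[OF sg ss] phiw_def phi_Phi Phi_scale sum_distrib_left power2_eq_square mult_ac)
  then show ?thesis by (simp add: LV_def calL_KE)
qed

lemma pd_LV_w:
  assumes sg: "\<And>r \<alpha> \<beta>. grr r \<alpha> \<beta> = grr r \<beta> \<alpha>" and ss: "\<And>r a b. gss r a b = gss r b a"
    and fnz: "f (rpart q) \<noteq> 0"
  shows "pd (LV grr gsr gss V A f q) w I = (f (rpart q))^2 * (PP grr gsr gss (rpart q) w I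
     - (\<Sum>b\<in>UNIV. PP grr gsr gss (rpart q) (axis I 1) (Inr b) * Phi A (rpart q) w b
                   + PP grr gsr gss (rpart q) w (Inr b) * Phi A (rpart q) (axis I 1) b))"
proof (rule pd_deriv)
  let ?c = "f (rpart q)" and ?r = "rpart q"
  have K: "((\<lambda>h. KE grr gsr gss ?r (w + h *\<^sub>R axis I 1)) has_real_derivative PP grr gsr gss ?r w I) (at 0)"
    using KE_dir[of grr ?r gss gsr w I] sg ss by simp
  have S: "((\<lambda>h. \<Sum>b\<in>UNIV. PP grr gsr gss ?r (w + h *\<^sub>R axis I 1) (Inr b) * Phi A ?r (w + h *\<^sub>R axis I 1) b)
     has_real_derivative (\<Sum>b\<in>UNIV. PP grr gsr gss ?r (axis I 1) (Inr b) * Phi A ?r w b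
                   + PP grr gsr gss ?r w (Inr b) * Phi A ?r (axis I 1) b)) (at 0)"
    unfolding PP_add PP_scale Phi_add Phi_scale
    by (auto intro!: derivative_eq_intros simp: algebra_simps)
  show "((\<lambda>h. LV grr gsr gss V A f q (w + h *\<^sub>R axis I 1)) has_real_derivative ?c^2 * (PP grr gsr gss ?r w I
     - (\<Sum>b\<in>UNIV. PP grr gsr gss ?r (axis I 1) (Inr b) * Phi A ?r w b
                   + PP grr gsr gss ?r w (Inr b) * Phi A ?r (axis I 1) b))) (at 0)"
    unfolding LV_explicit[where grr=grr and gss=gss and f=f, OF sg ss fnz]
    using DERIV_diff[OF DERIV_diff[OF DERIV_cmult[OF K, of "?c^2"] DERIV_const[of "V ?r"]] DERIV_cmult[OF S, of "?c^2"]]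
    by (simp add: algebra_simps)
qed

lemma gtilde_eq:
  assumes sg: "\<And>r \<alpha> \<beta>. grr r \<alpha> \<beta> = grr r \<beta> \<alpha>" and ss: "\<And>r a b. gss r a b = gss r b a"
  shows "gtilde grr gsr gss V f q $ a $ b = (f (rpart q))^2 * gss (rpart q) a b"
proof -
  have "pd (\<lambda>w. pd (calL grr gsr gss V f q) w (Inr a)) 0 (Inr b) = (f (rpart q))^2 * gss (rpart q) a b"
  proof (rule pd_deriv)
    have "((\<lambda>h. (f (rpart q))^2 * (h * gss (rpart q) a b)) has_real_derivative (f (rpart q))^2 * gss (rpart q) a b) (at 0)"
      by (auto intro!: derivative_eq_intros)
    then show "((\<lambda>h. pd (calL grr gsr gss V f q) (0 + h *\<^sub>R axis (Inr b) 1) (Inr a)) has_real_derivative (f (rpart q))^2 * gss (rpart q) a b) (at 0)"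
      by (simp add: pd_calL[OF sg ss] PP_scale PP_axis_Inr ss[of _ b a])
  qed
  then show ?thesis by (simp add: gtilde_def)
qed

lemma calL_rpart: "rpart x = rpart y \<Longrightarrow> calL grr gsr gss V f x = calL grr gsr gss V f y"
  by (simp add: calL_def mechL_def fun_eq_iff)

lemma LV_rpart: "rpart x = rpart y \<Longrightarrow> LV grr gsr gss V A f x = LV grr gsr gss V A f y"
proof (rule ext)
  fix w assume "rpart x = rpart y"
  then have e: "calL grr gsr gss V f x = calL grr gsr gss V f y" by (rule calL_rpart)
  show "LV grr gsr gss V A f x w = LV grr gsr gss V A f y w"
    using \<open>rpart x = rpart y\<close> by (simp add: LV_def phiw_def phi_def e)
qed

lemma mechL_rpart: "rpart x = rpart y \<Longrightarrow> mechL grr gsr gss V x = mechL grr gsr gss V y"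
  by (simp add: mechL_def fun_eq_iff)

lemma pd_LV_x_Inr: "pd (\<lambda>x. LV grr gsr gss V A f x w) x (Inr a) = 0"
proof (rule pd_deriv)
  have "LV grr gsr gss V A f (x + h *\<^sub>R axis (Inr a) 1) w = LV grr gsr gss V A f x w" for h
    using LV_rpart[OF rpart_axis_Inr] by metis
  then show "((\<lambda>h. LV grr gsr gss V A f (x + h *\<^sub>R axis (Inr a) 1) w) has_real_derivative 0) (at 0)"
    by simp
qed

lemma pd_mechL_x_Inr: "pd (\<lambda>x. mechL grr gsr gss V x v) x (Inr a) = 0"
proof (rule pd_deriv)
  have "mechL grr gsr gss V (x + h *\<^sub>R axis (Inr a) 1) v = mechL grr gsr gss V x v" for h
    using mechL_rpart[OF rpart_axis_Inr] by metis
  then show "((\<lambda>h. mechL grr gsr gss V (x + h *\<^sub>R axis (Inr a) 1) v) has_real_derivative 0) (at 0)"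
    by simp
qed

definition dK where
  "dK grr gsr gss r \<alpha> v = KE (\<lambda>_ \<beta> \<gamma>. pd (\<lambda>x. grr x \<beta> \<gamma>) r \<alpha>) (\<lambda>_ a \<beta>. pd (\<lambda>x. gsr x a \<beta>) r \<alpha>)
      (\<lambda>_ a b. pd (\<lambda>x. gss x a b) r \<alpha>) r v"

definition dPP where
  "dPP grr gsr gss r \<alpha> v I = PP (\<lambda>_ \<beta> \<gamma>. pd (\<lambda>x. grr x \<beta> \<gamma>) r \<alpha>) (\<lambda>_ a \<beta>. pd (\<lambda>x. gsr x a \<beta>) r \<alpha>)
      (\<lambda>_ a b. pd (\<lambda>x. gss x a b) r \<alpha>) r v I"

definition dPhi where
  "dPhi A r \<alpha> v b = (\<Sum>\<beta>\<in>UNIV. pd (\<lambda>x. A x b \<beta>) r \<alpha> * v $ Inl \<beta>)"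

locale dcoef =
  fixes grr :: "real^'m::finite \<Rightarrow> 'm \<Rightarrow> 'm \<Rightarrow> real"
    and gsr :: "real^'m \<Rightarrow> 'k::finite \<Rightarrow> 'm \<Rightarrow> real"
    and gss :: "real^'m \<Rightarrow> 'k \<Rightarrow> 'k \<Rightarrow> real"
    and V :: "real^'m \<Rightarrow> real"
    and A :: "real^'m \<Rightarrow> 'k \<Rightarrow> 'm \<Rightarrow> real"
    and f :: "real^'m \<Rightarrow> real"
  assumes dgrr: "\<And>\<beta> \<gamma> y. (\<lambda>r. grr r \<beta> \<gamma>) differentiable (at y)"
    and dgsr: "\<And>a \<beta> y. (\<lambda>r. gsr r a \<beta>) differentiable (at y)"
    and dgss: "\<And>a b y. (\<lambda>r. gss r a b) differentiable (at y)"
    and dV: "\<And>y. V differentiable (at y)"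
    and dA: "\<And>a \<beta> y. (\<lambda>r. A r a \<beta>) differentiable (at y)"
    and df: "\<And>y. f differentiable (at y)"
begin

lemma g1: "((\<lambda>h. grr (r + h *\<^sub>R axis \<alpha> 1) \<beta> \<gamma>) has_real_derivative pd (\<lambda>x. grr x \<beta> \<gamma>) r \<alpha>) (at 0)"
  using pd_has_deriv[OF dgrr] .
lemma g2: "((\<lambda>h. gsr (r + h *\<^sub>R axis \<alpha> 1) a \<beta>) has_real_derivative pd (\<lambda>x. gsr x a \<beta>) r \<alpha>) (at 0)"
  using pd_has_deriv[OF dgsr] .
lemma g3: "((\<lambda>h. gss (r + h *\<^sub>R axis \<alpha> 1) a b) has_real_derivative pd (\<lambda>x. gss x a b) r \<alpha>) (at 0)"
  using pd_has_deriv[OF dgss] .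
lemma g4: "((\<lambda>h. V (r + h *\<^sub>R axis \<alpha> 1)) has_real_derivative pd V r \<alpha>) (at 0)"
  using pd_has_deriv[OF dV] .
lemma g5: "((\<lambda>h. A (r + h *\<^sub>R axis \<alpha> 1) a \<beta>) has_real_derivative pd (\<lambda>x. A x a \<beta>) r \<alpha>) (at 0)"
  using pd_has_deriv[OF dA] .
lemma g6: "((\<lambda>h. f (r + h *\<^sub>R axis \<alpha> 1)) has_real_derivative pd f r \<alpha>) (at 0)"
  using pd_has_deriv[OF df] .

lemma KE_r_dir: "((\<lambda>h. KE grr gsr gss (r + h *\<^sub>R axis \<alpha> 1) v) has_real_derivative dK grr gsr gss r \<alpha> v) (at 0)"
  unfolding KE_def dK_def
  by (intro derivative_eq_intros; (rule g1 g2 g3)?) auto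

lemma PP_r_dir: "((\<lambda>h. PP grr gsr gss (r + h *\<^sub>R axis \<alpha> 1) v I) has_real_derivative dPP grr gsr gss r \<alpha> v I) (at 0)"
  unfolding PP_def dPP_def
  by (cases I) (simp_all, (intro derivative_eq_intros; (rule g1 g2 g3)?; auto)+)

lemma Phi_r_dir: "((\<lambda>h. Phi A (r + h *\<^sub>R axis \<alpha> 1) v b) has_real_derivative dPhi A r \<alpha> v b) (at 0)"
  unfolding Phi_def dPhi_def
  by (intro derivative_eq_intros; (rule g5)?) auto

lemma pd_mechL_x_Inl: "pd (\<lambda>x. mechL grr gsr gss V x v) x (Inl \<alpha>) = dK grr gsr gss (rpart x) \<alpha> v - pd V (rpart x) \<alpha>"
proof (rule pd_deriv)
  show "((\<lambda>h. mechL grr gsr gss V (x + h *\<^sub>R axis (Inl \<alpha>) 1) v) has_real_derivative dK grr gsr gss (rpart x) \<alpha> v - pd V (rpart x) \<alpha>) (at 0)"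
    unfolding mechL_KE rpart_axis_Inl
    by (intro DERIV_diff KE_r_dir g4)
qed

lemma pd_LV_x_Inl:
  assumes sg: "\<And>r \<alpha> \<beta>. grr r \<alpha> \<beta> = grr r \<beta> \<alpha>" and ss: "\<And>r a b. gss r a b = gss r b a"
    and fnz: "\<And>r. f r \<noteq> 0"
    and P0: "\<And>b. Phi A (rpart x) w b = 0"
  shows "pd (\<lambda>x. LV grr gsr gss V A f x w) x (Inl \<alpha>) =
     2 * f (rpart x) * pd f (rpart x) \<alpha> * KE grr gsr gss (rpart x) w + (f (rpart x))^2 * dK grr gsr gss (rpart x) \<alpha> w
     - pd V (rpart x) \<alpha>
     - (f (rpart x))^2 * (\<Sum>b\<in>UNIV. PP grr gsr gss (rpart x) w (Inr b) * dPhi A (rpart x) \<alpha> w b)"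
proof (rule pd_deriv)
  let ?r = "rpart x"
  have e: "LV grr gsr gss V A f (x + h *\<^sub>R axis (Inl \<alpha>) 1) w =
     (f (?r + h *\<^sub>R axis \<alpha> 1))^2 * KE grr gsr gss (?r + h *\<^sub>R axis \<alpha> 1) w - V (?r + h *\<^sub>R axis \<alpha> 1)
     - (f (?r + h *\<^sub>R axis \<alpha> 1))^2 * (\<Sum>b\<in>UNIV. PP grr gsr gss (?r + h *\<^sub>R axis \<alpha> 1) w (Inr b) * Phi A (?r + h *\<^sub>R axis \<alpha> 1) w b)" for h
    using LV_explicit[where grr=grr and gss=gss and f=f, OF sg ss fnz] by (simp add: rpart_axis_Inl)
  have S: "((\<lambda>h. \<Sum>b\<in>UNIV. PP grr gsr gss (?r + h *\<^sub>R axis \<alpha> 1) w (Inr b) * Phi A (?r + h *\<^sub>R axis \<alpha> 1) w b)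
     has_real_derivative (\<Sum>b\<in>UNIV. PP grr gsr gss ?r w (Inr b) * dPhi A ?r \<alpha> w b)) (at 0)"
    by (intro derivative_eq_intros; (rule PP_r_dir Phi_r_dir)?) (auto simp: P0)
  have S0: "(\<Sum>b\<in>UNIV. PP grr gsr gss ?r w (Inr b) * Phi A ?r w b) = 0" by (simp add: P0)
  show "((\<lambda>h. LV grr gsr gss V A f (x + h *\<^sub>R axis (Inl \<alpha>) 1) w) has_real_derivative
     2 * f ?r * pd f ?r \<alpha> * KE grr gsr gss ?r w + (f ?r)^2 * dK grr gsr gss ?r \<alpha> w
     - pd V ?r \<alpha> - (f ?r)^2 * (\<Sum>b\<in>UNIV. PP grr gsr gss ?r w (Inr b) * dPhi A ?r \<alpha> w b)) (at 0)"
  proof -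
    have F2: "((\<lambda>h. (f (?r + h *\<^sub>R axis \<alpha> 1))^2) has_real_derivative 2 * f ?r * pd f ?r \<alpha>) (at 0)"
      by (intro derivative_eq_intros; (rule g6)?) auto
    note X = DERIV_diff[OF DERIV_diff[OF DERIV_mult[OF F2 KE_r_dir[of ?r \<alpha> w]] g4[of ?r \<alpha>]] DERIV_mult[OF F2 S]]
    show ?thesis unfolding e by (rule DERIV_cong[OF X]) (simp add: S0 P0 algebra_simps)
  qed
qed

end

definition Jv :: "(real^'m \<Rightarrow> 'k \<Rightarrow> 'm \<Rightarrow> real) \<Rightarrow> real^'m::finite \<Rightarrow> real^'m \<Rightarrow> real^('m + 'k::finite)" where
  "Jv A r u = joinv u (\<chi> a. - (\<Sum>\<beta>\<in>UNIV. A r a \<beta> * u $ \<beta>))"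

definition Psi where
  "Psi grr gsr gss A r v \<alpha> = PP grr gsr gss r v (Inl \<alpha>) - (\<Sum>b\<in>UNIV. A r b \<alpha> * PP grr gsr gss r v (Inr b))"

lemma Jv_Inl[simp]: "Jv A r u $ Inl \<alpha> = u $ \<alpha>" by (simp add: Jv_def joinv_def)
lemma Jv_Inr[simp]: "Jv A r u $ Inr b = - (\<Sum>\<beta>\<in>UNIV. A r b \<beta> * u $ \<beta>)" by (simp add: Jv_def joinv_def)
lemma rpart_joinv[simp]: "rpart (joinv r s) = r" by (simp add: rpart_def joinv_def)

lemma linear_Jv: "linear (Jv A r)"
proof (rule linearI)
  show "Jv A r (x + y) = Jv A r x + Jv A r y" for x y
    unfolding vec_eq_iff by (auto simp: Jv_def joinv_def algebra_simps sum.distrib split: sum.split)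
  show "Jv A r (c *\<^sub>R x) = c *\<^sub>R Jv A r x" for c x
    unfolding vec_eq_iff by (auto simp: Jv_def joinv_def algebra_simps sum_distrib_left split: sum.split)
qed

lemma linear_PP: "linear (\<lambda>v. PP grr gsr gss r v I)"
  by (rule linearI) (simp_all add: PP_add PP_scale)

lemma Psi_add: "Psi grr gsr gss A r (v + w) \<alpha> = Psi grr gsr gss A r v \<alpha> + Psi grr gsr gss A r w \<alpha>"
  by (simp add: Psi_def PP_add algebra_simps sum.distrib)
lemma Psi_scale: "Psi grr gsr gss A r (c *\<^sub>R v) \<alpha> = c * Psi grr gsr gss A r v \<alpha>"
  by (simp add: Psi_def PP_scale algebra_simps sum_distrib_left)
lemma linear_Psi: "linear (\<lambda>v. Psi grr gsr gss A r v \<alpha>)"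
  by (rule linearI) (simp_all add: Psi_add Psi_scale)

lemma sumPlus: "(\<Sum>I\<in>(UNIV::('a::finite + 'b::finite) set). g I) = (\<Sum>\<alpha>\<in>UNIV. g (Inl \<alpha>)) + (\<Sum>a\<in>UNIV. g (Inr a))"
proof -
  have "(\<Sum>I\<in>(UNIV::('a + 'b) set). g I) = (\<Sum>I\<in>(UNIV <+> UNIV). g I)" by simp
  also have "\<dots> = (\<Sum>\<alpha>\<in>UNIV. g (Inl \<alpha>)) + (\<Sum>a\<in>UNIV. g (Inr a))"
    by (subst sum.Plus) auto
  finally show ?thesis .
qed

lemma lc_KE: "lc grr gsr gss V A r u = KE grr gsr gss r (Jv A r u) - V r"
  by (simp add: lc_def mechL_KE Jv_def)

lemma vec_nth_diff: "(\<lambda>w::real^'z::finite. w $ i) differentiable (at x)"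
  by (rule bounded_linear_imp_differentiable[OF bounded_linear_vec_nth])

lemma KE_differentiable: "(KE grr gsr gss r) differentiable (at v)"
proof -
  note c = vec_nth_diff
  show ?thesis unfolding KE_def
    by (intro differentiable_add differentiable_sum differentiable_mult differentiable_const c ballI) auto
qed

lemma pd_KE: assumes sg: "\<And>\<alpha> \<beta>. grr r \<alpha> \<beta> = grr r \<beta> \<alpha>" and ss: "\<And>a b. gss r a b = gss r b a"
  shows "pd (KE grr gsr gss r) v I = PP grr gsr gss r v I"
  by (rule pd_deriv[OF KE_dir[where grr=grr and gss=gss and r=r, OF sg ss]])

lemma dir_frechet:
  fixes G :: "real^'i::finite \<Rightarrow> real"
  assumes "(G has_derivative (\<lambda>k. \<Sum>i\<in>UNIV. D i * k $ i)) (at v)"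
  shows "((\<lambda>h. G (v + h *\<^sub>R d)) has_real_derivative (\<Sum>i\<in>UNIV. D i * d $ i)) (at 0)"
proof -
  have d1: "((\<lambda>h::real. v + h *\<^sub>R d) has_derivative (\<lambda>h. h *\<^sub>R d)) (at 0)"
    by (auto intro!: derivative_eq_intros)
  have "((\<lambda>h. G (v + h *\<^sub>R d)) has_derivative (\<lambda>h. \<Sum>i\<in>UNIV. D i * (h *\<^sub>R d) $ i)) (at 0)"
  proof -
    have "(G has_derivative (\<lambda>k. \<Sum>i\<in>UNIV. D i * k $ i)) (at ((\<lambda>h::real. v + h *\<^sub>R d) 0))"
      using assms by simp
    from has_derivative_compose[OF d1 this] show ?thesis by simp
  qed
  moreover have "(\<lambda>h. \<Sum>i\<in>UNIV. D i * (h *\<^sub>R d) $ i) = (*) (\<Sum>i\<in>UNIV. D i * d $ i)"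
    by (rule ext) (simp add: sum_distrib_left sum_distrib_right algebra_simps)
  ultimately show ?thesis unfolding has_field_derivative_def by simp
qed

lemma KE_dirgen: assumes sg: "\<And>\<alpha> \<beta>. grr r \<alpha> \<beta> = grr r \<beta> \<alpha>" and ss: "\<And>a b. gss r a b = gss r b a"
  shows "((\<lambda>h. KE grr gsr gss r (v + h *\<^sub>R d)) has_real_derivative (\<Sum>I\<in>UNIV. PP grr gsr gss r v I * d $ I)) (at 0)"
  using dir_frechet[OF frechet_pd[OF KE_differentiable[of grr gsr gss r v]], of d] by (simp add: pd_KE[where grr=grr and gss=gss and r=r, OF sg ss])

lemma KE_euler: assumes sg: "\<And>\<alpha> \<beta>. grr r \<alpha> \<beta> = grr r \<beta> \<alpha>" and ss: "\<And>a b. gss r a b = gss r b a"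
  shows "(\<Sum>I\<in>UNIV. PP grr gsr gss r v I * v $ I) = 2 * KE grr gsr gss r v"
proof -
  have e: "KE grr gsr gss r (v + h *\<^sub>R v) = (1 + h)^2 * KE grr gsr gss r v" for h
    using KE_scale[of grr gsr gss r "1 + h" v] by (simp add: algebra_simps)
  have "((\<lambda>h. KE grr gsr gss r (v + h *\<^sub>R v)) has_real_derivative 2 * KE grr gsr gss r v) (at 0)"
    unfolding e by (auto intro!: derivative_eq_intros)
  with KE_dirgen[where grr=grr and gss=gss and r=r and gsr=gsr and v=v and d=v, OF sg ss] show ?thesis using DERIV_unique by blast
qed

lemma pd_lc: assumes sg: "\<And>\<alpha> \<beta>. grr r \<alpha> \<beta> = grr r \<beta> \<alpha>" and ss: "\<And>a b. gss r a b = gss r b a"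
  shows "pd (lc grr gsr gss V A r) u \<alpha> = Psi grr gsr gss A r (Jv A r u) \<alpha>"
proof (rule pd_deriv)
  have e: "lc grr gsr gss V A r (u + h *\<^sub>R axis \<alpha> 1) = KE grr gsr gss r (Jv A r u + h *\<^sub>R Jv A r (axis \<alpha> 1)) - V r" for h
    by (simp add: lc_KE linear_add[OF linear_Jv] linear_scale[OF linear_Jv])
  have s: "(\<Sum>I\<in>UNIV. PP grr gsr gss r (Jv A r u) I * Jv A r (axis \<alpha> 1) $ I) = Psi grr gsr gss A r (Jv A r u) \<alpha>"
    by (simp add: sumPlus axis1 ifm Psi_def sum_negf algebra_simps)
  show "((\<lambda>h. lc grr gsr gss V A r (u + h *\<^sub>R axis \<alpha> 1)) has_real_derivative Psi grr gsr gss A r (Jv A r u) \<alpha>) (at 0)"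
    unfolding e using DERIV_diff[OF KE_dirgen[where grr=grr and gss=gss and r=r and gsr=gsr and v="Jv A r u" and d="Jv A r (axis \<alpha> 1)", OF sg ss] DERIV_const[of "V r"]] s by simp
qed

lemma Gmat_eq: assumes sg: "\<And>r \<alpha> \<beta>. grr r \<alpha> \<beta> = grr r \<beta> \<alpha>" and ss: "\<And>r a b. gss r a b = gss r b a"
  shows "Gmat grr gsr gss V A r $ \<alpha> $ \<beta> = Psi grr gsr gss A r (Jv A r (axis \<beta> 1)) \<alpha>"
proof -
  have "pd (\<lambda>u. pd (lc grr gsr gss V A r) u \<alpha>) 0 \<beta> = Psi grr gsr gss A r (Jv A r (axis \<beta> 1)) \<alpha>"
  proof (rule pd_deriv)
    have e: "pd (lc grr gsr gss V A r) (0 + h *\<^sub>R axis \<beta> 1) \<alpha> = h * Psi grr gsr gss A r (Jv A r (axis \<beta> 1)) \<alpha>" for h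
      by (simp add: pd_lc[where grr=grr and gss=gss and r=r, OF sg ss] linear_scale[OF linear_Jv] Psi_scale)
    show "((\<lambda>h. pd (lc grr gsr gss V A r) (0 + h *\<^sub>R axis \<beta> 1) \<alpha>) has_real_derivative Psi grr gsr gss A r (Jv A r (axis \<beta> 1)) \<alpha>) (at 0)"
      unfolding e by (auto intro!: derivative_eq_intros)
  qed
  then show ?thesis by (simp add: Gmat_def)
qed

lemma G_contract1: assumes sg: "\<And>r \<alpha> \<beta>. grr r \<alpha> \<beta> = grr r \<beta> \<alpha>" and ss: "\<And>r a b. gss r a b = gss r b a"
  shows "(\<Sum>\<beta>\<in>UNIV. Gmat grr gsr gss V A r $ \<alpha> $ \<beta> * u $ \<beta>) = Psi grr gsr gss A r (Jv A r u) \<alpha>"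
proof -
  have "Jv A r u = Jv A r (\<Sum>\<beta>\<in>UNIV. u $ \<beta> *\<^sub>R axis \<beta> 1)"
    using basis_expansion[of u] by (simp add: scalar_mult_eq_scaleR)
  also have "\<dots> = (\<Sum>\<beta>\<in>UNIV. u $ \<beta> *\<^sub>R Jv A r (axis \<beta> 1))"
    by (simp add: linear_sum[OF linear_Jv] linear_scale[OF linear_Jv] o_def)
  finally have "Jv A r u = (\<Sum>\<beta>\<in>UNIV. u $ \<beta> *\<^sub>R Jv A r (axis \<beta> 1))" .
  then have "Psi grr gsr gss A r (Jv A r u) \<alpha> = (\<Sum>\<beta>\<in>UNIV. u $ \<beta> * Psi grr gsr gss A r (Jv A r (axis \<beta> 1)) \<alpha>)"
    by (simp add: linear_sum[OF linear_Psi] Psi_scale)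
  then show ?thesis by (simp add: Gmat_eq[OF sg ss] mult.commute)
qed

lemma G_contract2: assumes sg: "\<And>r \<alpha> \<beta>. grr r \<alpha> \<beta> = grr r \<beta> \<alpha>" and ss: "\<And>r a b. gss r a b = gss r b a"
  shows "(\<Sum>\<alpha>\<in>UNIV. \<Sum>\<beta>\<in>UNIV. Gmat grr gsr gss V A r $ \<alpha> $ \<beta> * u $ \<alpha> * u $ \<beta>) = 2 * KE grr gsr gss r (Jv A r u)"
proof -
  have "(\<Sum>\<alpha>\<in>UNIV. \<Sum>\<beta>\<in>UNIV. Gmat grr gsr gss V A r $ \<alpha> $ \<beta> * u $ \<alpha> * u $ \<beta>)
      = (\<Sum>\<alpha>\<in>UNIV. u $ \<alpha> * Psi grr gsr gss A r (Jv A r u) \<alpha>)"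
  proof -
    have "(\<Sum>\<alpha>\<in>UNIV. u $ \<alpha> * Psi grr gsr gss A r (Jv A r u) \<alpha>)
       = (\<Sum>\<alpha>\<in>UNIV. u $ \<alpha> * (\<Sum>\<beta>\<in>UNIV. Gmat grr gsr gss V A r $ \<alpha> $ \<beta> * u $ \<beta>))"
      by (simp add: G_contract1[OF sg ss])
    then show ?thesis by (simp add: sum_distrib_left mult_ac)
  qed
  also have "\<dots> = (\<Sum>I\<in>UNIV. PP grr gsr gss r (Jv A r u) I * Jv A r u $ I)"
  proof -
    have sw: "(\<Sum>\<alpha>\<in>UNIV. u $ \<alpha> * (\<Sum>b\<in>UNIV. A r b \<alpha> * PP grr gsr gss r (Jv A r u) (Inr b)))
        = (\<Sum>b\<in>UNIV. PP grr gsr gss r (Jv A r u) (Inr b) * (\<Sum>\<beta>\<in>UNIV. A r b \<beta> * u $ \<beta>))"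
      unfolding sum_distrib_left sum_distrib_right
      by (rule trans[OF sum.swap]) (simp add: mult_ac)
    show ?thesis
      unfolding sumPlus Psi_def right_diff_distrib sum_subtractf sw
      by (simp add: mult.commute sum_negf)
  qed
  also have "\<dots> = 2 * KE grr gsr gss r (Jv A r u)"
    by (rule KE_euler) (simp_all add: sg ss)
  finally show ?thesis .
qed

lemma PP_M: "PP grr gsr gss r (Jv A r u) (Inr b) = (\<Sum>\<gamma>\<in>UNIV. Mmat gsr gss A r b \<gamma> * u $ \<gamma>)"
proof -
  have sw: "(\<Sum>c\<in>UNIV. gss r b c * (\<Sum>\<beta>\<in>UNIV. A r c \<beta> * u $ \<beta>))
     = (\<Sum>\<gamma>\<in>UNIV. (\<Sum>c\<in>UNIV. gss r b c * A r c \<gamma>) * u $ \<gamma>)"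
    unfolding sum_distrib_left sum_distrib_right
    by (rule trans[OF sum.swap]) (simp add: mult_ac)
  show ?thesis
    unfolding PP_def Mmat_def left_diff_distrib sum_subtractf
    by (simp add: sw sum_negf)
qed

lemma KG_abs:
  fixes Gi G :: "'m::finite \<Rightarrow> 'm \<Rightarrow> real" and M :: "'k::finite \<Rightarrow> 'm \<Rightarrow> real" and B :: "'k \<Rightarrow> real"
  assumes inv: "\<And>\<epsilon> \<nu>. (\<Sum>\<mu>\<in>UNIV. Gi \<epsilon> \<mu> * G \<mu> \<nu>) = (if \<epsilon> = \<nu> then 1 else 0)"
  shows "(\<Sum>\<mu>\<in>UNIV. (\<Sum>b\<in>UNIV. \<Sum>\<epsilon>\<in>UNIV. M b \<epsilon> * Gi \<epsilon> \<mu> * B b) * G \<mu> \<nu>) = (\<Sum>b\<in>UNIV. M b \<nu> * B b)"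
proof -
  have "(\<Sum>\<mu>\<in>UNIV. (\<Sum>b\<in>UNIV. \<Sum>\<epsilon>\<in>UNIV. M b \<epsilon> * Gi \<epsilon> \<mu> * B b) * G \<mu> \<nu>)
      = (\<Sum>\<mu>\<in>UNIV. \<Sum>b\<in>UNIV. \<Sum>\<epsilon>\<in>UNIV. M b \<epsilon> * B b * (Gi \<epsilon> \<mu> * G \<mu> \<nu>))"
    by (simp add: sum_distrib_right sum_distrib_left mult_ac)
  also have "\<dots> = (\<Sum>b\<in>UNIV. \<Sum>\<mu>\<in>UNIV. \<Sum>\<epsilon>\<in>UNIV. M b \<epsilon> * B b * (Gi \<epsilon> \<mu> * G \<mu> \<nu>))"
    by (rule sum.swap)
  also have "\<dots> = (\<Sum>b\<in>UNIV. \<Sum>\<epsilon>\<in>UNIV. \<Sum>\<mu>\<in>UNIV. M b \<epsilon> * B b * (Gi \<epsilon> \<mu> * G \<mu> \<nu>))"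
    by (rule sum.cong[OF refl], rule sum.swap)
  also have "\<dots> = (\<Sum>b\<in>UNIV. \<Sum>\<epsilon>\<in>UNIV. M b \<epsilon> * B b * (if \<epsilon> = \<nu> then 1 else 0))"
    by (simp add: sum_distrib_left[symmetric] inv)
  also have "\<dots> = (\<Sum>b\<in>UNIV. M b \<nu> * B b)"
    by (simp add: ifm)
  finally show ?thesis .
qed

lemma contract:
  fixes G :: "'m::finite \<Rightarrow> 'm \<Rightarrow> real" and K :: "'m \<Rightarrow> 'm \<Rightarrow> 'm \<Rightarrow> real"
    and M :: "'k::finite \<Rightarrow> 'm \<Rightarrow> real" and B :: "'k \<Rightarrow> 'm \<Rightarrow> 'm \<Rightarrow> real"
  assumes feq: "\<And>\<nu> \<delta>. df \<delta> * G \<alpha> \<nu> + df \<nu> * G \<alpha> \<delta> - 2 * df \<alpha> * G \<delta> \<nu>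
      = c * (\<Sum>\<mu>\<in>UNIV. K \<mu> \<alpha> \<delta> * G \<mu> \<nu> + K \<mu> \<alpha> \<nu> * G \<mu> \<delta>)"
    and KG: "\<And>\<delta> \<nu>. (\<Sum>\<mu>\<in>UNIV. K \<mu> \<alpha> \<delta> * G \<mu> \<nu>) = (\<Sum>b\<in>UNIV. M b \<nu> * B b \<alpha> \<delta>)"
  shows "(\<Sum>\<delta>\<in>UNIV. df \<delta> * u \<delta>) * (\<Sum>\<nu>\<in>UNIV. G \<alpha> \<nu> * u \<nu>) - df \<alpha> * (\<Sum>\<delta>\<in>UNIV. \<Sum>\<nu>\<in>UNIV. G \<delta> \<nu> * u \<delta> * u \<nu>)
       = c * (\<Sum>b\<in>UNIV. (\<Sum>\<nu>\<in>UNIV. M b \<nu> * u \<nu>) * (\<Sum>\<delta>\<in>UNIV. B b \<alpha> \<delta> * u \<delta>))"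
proof -
  define L where "L = (\<Sum>\<delta>\<in>UNIV. \<Sum>\<nu>\<in>UNIV. (df \<delta> * G \<alpha> \<nu> + df \<nu> * G \<alpha> \<delta> - 2 * df \<alpha> * G \<delta> \<nu>) * u \<delta> * u \<nu>)"
  define R where "R = (\<Sum>\<delta>\<in>UNIV. \<Sum>\<nu>\<in>UNIV. c * (\<Sum>\<mu>\<in>UNIV. K \<mu> \<alpha> \<delta> * G \<mu> \<nu> + K \<mu> \<alpha> \<nu> * G \<mu> \<delta>) * u \<delta> * u \<nu>)"
  have LR: "L = R" unfolding L_def R_def by (simp add: feq)
  have s1: "(\<Sum>\<delta>\<in>UNIV. \<Sum>\<nu>\<in>UNIV. df \<delta> * G \<alpha> \<nu> * u \<delta> * u \<nu>) = (\<Sum>\<delta>\<in>UNIV. df \<delta> * u \<delta>) * (\<Sum>\<nu>\<in>UNIV. G \<alpha> \<nu> * u \<nu>)"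
    by (simp add: sum_product mult_ac)
  have s2: "(\<Sum>\<delta>\<in>UNIV. \<Sum>\<nu>\<in>UNIV. df \<nu> * G \<alpha> \<delta> * u \<delta> * u \<nu>) = (\<Sum>\<delta>\<in>UNIV. df \<delta> * u \<delta>) * (\<Sum>\<nu>\<in>UNIV. G \<alpha> \<nu> * u \<nu>)"
    by (subst sum.swap) (simp add: sum_product mult_ac)
  have s3: "(\<Sum>\<delta>\<in>UNIV. \<Sum>\<nu>\<in>UNIV. 2 * df \<alpha> * G \<delta> \<nu> * u \<delta> * u \<nu>) = 2 * df \<alpha> * (\<Sum>\<delta>\<in>UNIV. \<Sum>\<nu>\<in>UNIV. G \<delta> \<nu> * u \<delta> * u \<nu>)"
    by (simp add: sum_distrib_left mult_ac)
  have L2: "L = 2 * ((\<Sum>\<delta>\<in>UNIV. df \<delta> * u \<delta>) * (\<Sum>\<nu>\<in>UNIV. G \<alpha> \<nu> * u \<nu>) - df \<alpha> * (\<Sum>\<delta>\<in>UNIV. \<Sum>\<nu>\<in>UNIV. G \<delta> \<nu> * u \<delta> * u \<nu>))"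
  proof -
    have "L = (\<Sum>\<delta>\<in>UNIV. \<Sum>\<nu>\<in>UNIV. df \<delta> * G \<alpha> \<nu> * u \<delta> * u \<nu>) + (\<Sum>\<delta>\<in>UNIV. \<Sum>\<nu>\<in>UNIV. df \<nu> * G \<alpha> \<delta> * u \<delta> * u \<nu>)
        - (\<Sum>\<delta>\<in>UNIV. \<Sum>\<nu>\<in>UNIV. 2 * df \<alpha> * G \<delta> \<nu> * u \<delta> * u \<nu>)"
      unfolding L_def by (simp add: algebra_simps sum.distrib sum_subtractf)
    then show ?thesis using s1 s2 s3 by simp
  qed
  define Q where "Q = (\<Sum>b\<in>UNIV. (\<Sum>\<nu>\<in>UNIV. M b \<nu> * u \<nu>) * (\<Sum>\<delta>\<in>UNIV. B b \<alpha> \<delta> * u \<delta>))"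
  have r1: "(\<Sum>\<delta>\<in>UNIV. \<Sum>\<nu>\<in>UNIV. (\<Sum>\<mu>\<in>UNIV. K \<mu> \<alpha> \<delta> * G \<mu> \<nu>) * u \<delta> * u \<nu>) = Q"
  proof -
    have "(\<Sum>\<delta>\<in>UNIV. \<Sum>\<nu>\<in>UNIV. (\<Sum>\<mu>\<in>UNIV. K \<mu> \<alpha> \<delta> * G \<mu> \<nu>) * u \<delta> * u \<nu>)
        = (\<Sum>\<delta>\<in>UNIV. \<Sum>\<nu>\<in>UNIV. \<Sum>b\<in>UNIV. M b \<nu> * u \<nu> * (B b \<alpha> \<delta> * u \<delta>))"
      unfolding KG by (simp add: sum_distrib_right sum_distrib_left mult_ac)
    also have "\<dots> = (\<Sum>\<delta>\<in>UNIV. \<Sum>b\<in>UNIV. \<Sum>\<nu>\<in>UNIV. M b \<nu> * u \<nu> * (B b \<alpha> \<delta> * u \<delta>))"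
      by (rule sum.cong[OF refl], rule sum.swap)
    also have "\<dots> = (\<Sum>b\<in>UNIV. \<Sum>\<delta>\<in>UNIV. \<Sum>\<nu>\<in>UNIV. M b \<nu> * u \<nu> * (B b \<alpha> \<delta> * u \<delta>))"
      by (rule sum.swap)
    also have "\<dots> = (\<Sum>b\<in>UNIV. \<Sum>\<nu>\<in>UNIV. \<Sum>\<delta>\<in>UNIV. M b \<nu> * u \<nu> * (B b \<alpha> \<delta> * u \<delta>))"
      by (rule sum.cong[OF refl], rule sum.swap)
    also have "\<dots> = Q" unfolding Q_def sum_product ..
    finally show ?thesis .
  qed
  have r2: "(\<Sum>\<delta>\<in>UNIV. \<Sum>\<nu>\<in>UNIV. (\<Sum>\<mu>\<in>UNIV. K \<mu> \<alpha> \<nu> * G \<mu> \<delta>) * u \<delta> * u \<nu>) = Q"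
  proof -
    have "(\<Sum>\<delta>\<in>UNIV. \<Sum>\<nu>\<in>UNIV. (\<Sum>\<mu>\<in>UNIV. K \<mu> \<alpha> \<nu> * G \<mu> \<delta>) * u \<delta> * u \<nu>)
        = (\<Sum>\<nu>\<in>UNIV. \<Sum>\<delta>\<in>UNIV. (\<Sum>\<mu>\<in>UNIV. K \<mu> \<alpha> \<nu> * G \<mu> \<delta>) * u \<nu> * u \<delta>)"
      by (subst sum.swap) (simp add: mult_ac)
    then show ?thesis using r1 by simp
  qed
  have R2: "R = 2 * c * Q"
  proof -
    have "R = c * ((\<Sum>\<delta>\<in>UNIV. \<Sum>\<nu>\<in>UNIV. (\<Sum>\<mu>\<in>UNIV. K \<mu> \<alpha> \<delta> * G \<mu> \<nu>) * u \<delta> * u \<nu>)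
             + (\<Sum>\<delta>\<in>UNIV. \<Sum>\<nu>\<in>UNIV. (\<Sum>\<mu>\<in>UNIV. K \<mu> \<alpha> \<nu> * G \<mu> \<delta>) * u \<delta> * u \<nu>))"
      unfolding R_def by (simp add: sum.distrib algebra_simps sum_distrib_left)
    then show ?thesis using r1 r2 by simp
  qed
  from LR L2 R2 show ?thesis unfolding Q_def by simp
qed

lemma alg:
  fixes c :: real
  assumes c: "c \<noteq> 0"
    and EQ: "dc * Ps + c * (DPa - (\<Sum>b\<in>UNIV. dAA b * Pb b + Ab b * DPb b))
        = 2 * df * KEv + c * dKK - c * dVV - c * (\<Sum>b\<in>UNIV. Pb b * dPh b)"
    and KI: "dc * Ps - df * (2 * KEv) = c * (\<Sum>b\<in>UNIV. Pb b * (dAA b - dPh b))"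
  shows "DPa - (dKK - dVV) - (\<Sum>b\<in>UNIV. Ab b * (DPb b - 0)) = 0"
proof -
  have e1: "(\<Sum>b\<in>UNIV. dAA b * Pb b + Ab b * DPb b) = (\<Sum>b\<in>UNIV. dAA b * Pb b) + (\<Sum>b\<in>UNIV. Ab b * DPb b)"
    by (simp add: sum.distrib)
  have e2: "(\<Sum>b\<in>UNIV. Pb b * (dAA b - dPh b)) = (\<Sum>b\<in>UNIV. dAA b * Pb b) - (\<Sum>b\<in>UNIV. Pb b * dPh b)"
    by (simp add: sum_subtractf algebra_simps)
  have "c * (DPa - (dKK - dVV) - (\<Sum>b\<in>UNIV. Ab b * DPb b)) = 0"
    using EQ KI unfolding e1 e2 by (simp add: algebra_simps)
  with c show ?thesis by simp
qed

lemma smooth_diff: "smooth_fun G \<Longrightarrow> G differentiable (at y)"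
proof -
  assume "smooth_fun G"
  then have "Ck (Suc 0) G" unfolding smooth_fun_def by blast
  then show ?thesis by simp
qed

lemma C1_diff: "Ck 1 G \<Longrightarrow> G differentiable (at y)"
  by simp

lemma inv_left: "invertible (M::real^'n::finite^'n) \<Longrightarrow> matrix_inv M ** M = mat 1"
  unfolding invertible_def matrix_inv_def by (rule someI2_ex) auto

lemma inv_left_sum: "invertible (M::real^'n::finite^'n) \<Longrightarrow>
   (\<Sum>\<mu>\<in>UNIV. matrix_inv M $ \<epsilon> $ \<mu> * M $ \<mu> $ \<nu>) = (if \<epsilon> = \<nu> then 1 else 0)"
proof -
  assume "invertible M"
  then have "(matrix_inv M ** M) $ \<epsilon> $ \<nu> = mat 1 $ \<epsilon> $ \<nu>" by (simp add: inv_left)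
  then show ?thesis by (simp add: matrix_matrix_mult_def mat_def)
qed

lemma dPhi_scale: "dPhi A r \<alpha> (c *\<^sub>R v) b = c * dPhi A r \<alpha> v b"
  by (simp add: dPhi_def sum_distrib_left mult_ac)

lemma dK_scale: "dK grr gsr gss r \<alpha> (c *\<^sub>R v) = c^2 * dK grr gsr gss r \<alpha> v"
  by (simp add: dK_def KE_scale)

lemma rpart_nth[simp]: "rpart x $ \<alpha> = x $ Inl \<alpha>" by (simp add: rpart_def)

lemma Jv_rpart: "(\<And>b. Phi A r v b = 0) \<Longrightarrow> Jv A r (rpart v) = v"
  unfolding vec_eq_iff
proof
  fix I assume P: "\<And>b. Phi A r v b = 0"
  show "Jv A r (rpart v) $ I = v $ I"
  proof (cases I)
    case (Inr b) with P[of b] show ?thesis by (simp add: Phi_def)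
  qed simp
qed

lemma linear_rpart: "linear rpart"
  by (rule linearI) (simp_all add: rpart_def vec_eq_iff)

lemma bl_rpart: "bounded_linear (rpart :: real^('m::finite+'k::finite) \<Rightarrow> real^'m)"
  using linear_rpart linear_conv_bounded_linear by blast

lemma chain_pd:
  fixes G :: "real^'m::finite \<Rightarrow> real" and q :: "real \<Rightarrow> real^('m + 'k::finite)"
  assumes G: "G differentiable (at (rpart (q t)))" and q: "(q has_vector_derivative v) (at t)"
  shows "((\<lambda>\<tau>. G (rpart (q \<tau>))) has_real_derivative (\<Sum>\<beta>\<in>UNIV. pd G (rpart (q t)) \<beta> * v $ Inl \<beta>)) (at t)"
proof -
  have q': "(q has_derivative (\<lambda>h. h *\<^sub>R v)) (at t)" using q by (simp add: has_vector_derivative_def)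
  have r': "((\<lambda>\<tau>. rpart (q \<tau>)) has_derivative (\<lambda>h. rpart (h *\<^sub>R v))) (at t)"
    using has_derivative_compose[OF q' bounded_linear_imp_has_derivative[OF bl_rpart]] by simp
  have "((\<lambda>\<tau>. G (rpart (q \<tau>))) has_derivative (\<lambda>h. \<Sum>i\<in>UNIV. pd G (rpart (q t)) i * rpart (h *\<^sub>R v) $ i)) (at t)"
    using has_derivative_compose[OF r' frechet_pd[OF G]] by simp
  moreover have "(\<lambda>h. \<Sum>i\<in>UNIV. pd G (rpart (q t)) i * rpart (h *\<^sub>R v) $ i) = (*) (\<Sum>\<beta>\<in>UNIV. pd G (rpart (q t)) \<beta> * v $ Inl \<beta>)"
    by (rule ext) (simp add: sum_distrib_left sum_distrib_right mult_ac)
  ultimately show ?thesis unfolding has_field_derivative_def by simp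
qed

lemma nth_diff: "\<omega> differentiable (at t) \<Longrightarrow> (\<lambda>\<tau>. \<omega> \<tau> $ j) differentiable (at t)"
proof -
  assume "\<omega> differentiable (at t)"
  then obtain D where D: "(\<omega> has_derivative D) (at t)" by (auto simp: differentiable_def)
  show ?thesis using has_derivative_compose[OF D bounded_linear_imp_has_derivative[OF bounded_linear_vec_nth]]
    by (auto simp: differentiable_def)
qed

lemma deriv_diff: "(F has_real_derivative D) (at t) \<Longrightarrow> F differentiable (at t)"
  by (auto simp: differentiable_def dest: has_field_derivative_imp_has_derivative)

theorem theorem7:
  fixes grr :: "real^'m::finite \<Rightarrow> 'm \<Rightarrow> 'm \<Rightarrow> real"
    and gsr :: "real^'m \<Rightarrow> 'k::finite \<Rightarrow> 'm \<Rightarrow> real"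
    and gss :: "real^'m \<Rightarrow> 'k \<Rightarrow> 'k \<Rightarrow> real"
    and V :: "real^'m \<Rightarrow> real"
    and A :: "real^'m \<Rightarrow> 'k \<Rightarrow> 'm \<Rightarrow> real"
    and f :: "real^'m \<Rightarrow> real"
    and T :: "real set" and t0 :: real
    and q :: "real \<Rightarrow> real^('m + 'k)" and \<omega> :: "real \<Rightarrow> real^('m + 'k)"
  assumes grr_sym: "\<And>r \<alpha> \<beta>. grr r \<alpha> \<beta> = grr r \<beta> \<alpha>"
    and gss_sym: "\<And>r a b. gss r a b = gss r b a"
    and smooth_grr: "\<And>\<alpha> \<beta>. smooth_fun (\<lambda>r. grr r \<alpha> \<beta>)"
    and smooth_gsr: "\<And>a \<alpha>. smooth_fun (\<lambda>r. gsr r a \<alpha>)"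
    and smooth_gss: "\<And>a b. smooth_fun (\<lambda>r. gss r a b)"
    and smooth_V: "smooth_fun V"
    and smooth_A: "\<And>a \<alpha>. smooth_fun (\<lambda>r. A r a \<alpha>)"
    and G_inv: "\<And>r. invertible (Gmat grr gsr gss V A r)"
    and f_C1: "Ck 1 f"
    and f_nz: "\<And>r. f r \<noteq> 0"
    and f_eq: "\<And>r \<alpha> \<nu> \<delta>.
        pd f r \<delta> * Gmat grr gsr gss V A r $ \<alpha> $ \<nu>
      + pd f r \<nu> * Gmat grr gsr gss V A r $ \<alpha> $ \<delta>
      - 2 * pd f r \<alpha> * Gmat grr gsr gss V A r $ \<delta> $ \<nu>
      = f r * (\<Sum>\<mu>\<in>UNIV. Kten grr gsr gss V A r \<mu> \<alpha> \<delta> * Gmat grr gsr gss V A r $ \<mu> $ \<nu>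
                   + Kten grr gsr gss V A r \<mu> \<alpha> \<nu> * Gmat grr gsr gss V A r $ \<mu> $ \<delta>)"
    and gtilde_inv: "\<And>x. invertible (gtilde grr gsr gss V f x)"
    and T_open: "open T" and T_int: "is_interval T" and t0_T: "t0 \<in> T"
    and q_vel: "\<And>t. t \<in> T \<Longrightarrow>
        (q has_vector_derivative (f (rpart (q t)) *\<^sub>R \<omega> t)) (at t)"
    and \<omega>_diff: "\<And>t. t \<in> T \<Longrightarrow> \<omega> differentiable (at t)"
    and LV_eqs: "\<And>t I. t \<in> T \<Longrightarrow>
        ((\<lambda>\<tau>. pd (LV grr gsr gss V A f (q \<tau>)) (\<omega> \<tau>) I) has_real_derivative
           f (rpart (q t)) * pd (\<lambda>x. LV grr gsr gss V A f x (\<omega> t)) (q t) I) (at t)"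
    and init: "\<And>a. phiw A f (q t0) (\<omega> t0) a = 0"
  shows "\<forall>t\<in>T.
      (\<forall>a. phi A (q t) (vector_derivative q (at t)) a = 0)
    \<and> (\<forall>I. (\<lambda>\<tau>. pd (mechL grr gsr gss V (q \<tau>)) (vector_derivative q (at \<tau>)) I)
             differentiable (at t))
    \<and> (\<forall>\<alpha>.
        (deriv (\<lambda>\<tau>. pd (mechL grr gsr gss V (q \<tau>)) (vector_derivative q (at \<tau>)) (Inl \<alpha>)) t
          - pd (\<lambda>x. mechL grr gsr gss V x (vector_derivative q (at t))) (q t) (Inl \<alpha>))
      - (\<Sum>a\<in>UNIV. A (rpart (q t)) a \<alpha> *
          (deriv (\<lambda>\<tau>. pd (mechL grr gsr gss V (q \<tau>)) (vector_derivative q (at \<tau>)) (Inr a)) t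
            - pd (\<lambda>x. mechL grr gsr gss V x (vector_derivative q (at t))) (q t) (Inr a)))
      = 0)"
proof -
  note sg = grr_sym and ss = gss_sym
  interpret dcoef grr gsr gss V A f
    by unfold_locales (auto intro: smooth_diff smooth_grr smooth_gsr smooth_gss smooth_V smooth_A C1_diff[OF f_C1])
  have vd: "vector_derivative q (at \<tau>) = f (rpart (q \<tau>)) *\<^sub>R \<omega> \<tau>" if "\<tau> \<in> T" for \<tau>
    using vector_derivative_at[OF q_vel[OF that]] .
  have qv: "(q has_vector_derivative vector_derivative q (at \<tau>)) (at \<tau>)" if "\<tau> \<in> T" for \<tau>
    using q_vel[OF that] vd[OF that] by simp

  have Cform: "pd (LV grr gsr gss V A f (q \<tau>)) (\<omega> \<tau>) (Inr a)
      = - ((f (rpart (q \<tau>)))^2 * (\<Sum>b\<in>UNIV. gss (rpart (q \<tau>)) b a * Phi A (rpart (q \<tau>)) (\<omega> \<tau>) b))" for \<tau> a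
  proof -
    have e: "(\<Sum>b\<in>UNIV. PP grr gsr gss (rpart (q \<tau>)) (axis (Inr a) 1) (Inr b) * Phi A (rpart (q \<tau>)) (\<omega> \<tau>) b
             + PP grr gsr gss (rpart (q \<tau>)) (\<omega> \<tau>) (Inr b) * Phi A (rpart (q \<tau>)) (axis (Inr a) 1) b)
           = (\<Sum>b\<in>UNIV. gss (rpart (q \<tau>)) b a * Phi A (rpart (q \<tau>)) (\<omega> \<tau>) b) + PP grr gsr gss (rpart (q \<tau>)) (\<omega> \<tau>) (Inr a)"
      by (simp add: PP_axis_Inr Phi_axis_Inr ifm sum.distrib)
    show ?thesis using pd_LV_w[where grr=grr and gss=gss and f=f and gsr=gsr and V=V and A=A and q="q \<tau>" and w="\<omega> \<tau>" and I="Inr a", OF sg ss f_nz]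
      unfolding e by (simp add: algebra_simps)
  qed
  have Cder: "((\<lambda>\<tau>. pd (LV grr gsr gss V A f (q \<tau>)) (\<omega> \<tau>) (Inr a)) has_real_derivative 0) (at t)"
    if "t \<in> T" for t a
    using LV_eqs[OF that, of "Inr a"] by (simp add: pd_LV_x_Inr)
  have convT: "convex T" using T_int by (simp add: is_interval_convex)
  have Cconst: "pd (LV grr gsr gss V A f (q \<tau>)) (\<omega> \<tau>) (Inr a) = pd (LV grr gsr gss V A f (q t0)) (\<omega> t0) (Inr a)"
    if "\<tau> \<in> T" for \<tau> a
  proof -
    have "\<exists>k. \<forall>x\<in>T. pd (LV grr gsr gss V A f (q x)) (\<omega> x) (Inr a) = k"
      by (rule has_field_derivative_zero_constant[OF convT], rule has_field_derivative_at_within, rule Cder)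
    then obtain k where "\<forall>x\<in>T. pd (LV grr gsr gss V A f (q x)) (\<omega> x) (Inr a) = k" by blast
    then show ?thesis using that t0_T by simp
  qed
  have Phi_t0: "Phi A (rpart (q t0)) (\<omega> t0) b = 0" for b
  proof -
    have "f (rpart (q t0)) * Phi A (rpart (q t0)) (\<omega> t0) b = 0" using init[of b]
      by (simp add: phiw_def phi_Phi Phi_scale)
    with f_nz show ?thesis by simp
  qed
  have Phi0: "Phi A (rpart (q \<tau>)) (\<omega> \<tau>) b = 0" if "\<tau> \<in> T" for \<tau> b
  proof -
    let ?r = "rpart (q \<tau>)" and ?c = "f (rpart (q \<tau>))"
    have z0: "?c ^ 2 * (\<Sum>b\<in>UNIV. gss ?r b a * Phi A ?r (\<omega> \<tau>) b) = 0" for a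
      using Cconst[OF that, of a] Cform[of \<tau> a] Cform[of t0 a] Phi_t0 by simp
    have z: "(\<Sum>b\<in>UNIV. gss ?r a b * Phi A ?r (\<omega> \<tau>) b) = 0" for a
    proof -
      have "(\<Sum>b\<in>UNIV. gss ?r a b * Phi A ?r (\<omega> \<tau>) b) = (\<Sum>b\<in>UNIV. gss ?r b a * Phi A ?r (\<omega> \<tau>) b)"
        by (rule sum.cong[OF refl], subst ss, rule refl)
      then show ?thesis using z0[of a] f_nz[of ?r] by simp
    qed
    define \<phi> where "\<phi> = (\<chi> b. Phi A ?r (\<omega> \<tau>) b)"
    have "gtilde grr gsr gss V f (q \<tau>) *v \<phi> = gtilde grr gsr gss V f (q \<tau>) *v 0"
      unfolding vec_eq_iff
    proof
      fix a
      have "(\<Sum>b\<in>UNIV. ?c ^ 2 * gss ?r a b * Phi A ?r (\<omega> \<tau>) b) = ?c ^ 2 * (\<Sum>b\<in>UNIV. gss ?r a b * Phi A ?r (\<omega> \<tau>) b)"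
        by (simp add: sum_distrib_left mult_ac)
      then show "(gtilde grr gsr gss V f (q \<tau>) *v \<phi>) $ a = (gtilde grr gsr gss V f (q \<tau>) *v 0) $ a"
        by (simp add: matrix_vector_mult_def gtilde_eq[OF sg ss] \<phi>_def z)
    qed
    then have "\<phi> = 0" using inj_matrix_vector_mult[OF gtilde_inv] by (meson injD)
    then show ?thesis by (simp add: \<phi>_def vec_eq_iff)
  qed
  have PhiV: "Phi A (rpart (q \<tau>)) (vector_derivative q (at \<tau>)) b = 0" if "\<tau> \<in> T" for \<tau> b
    by (simp add: vd[OF that] Phi_scale Phi0[OF that])

  define P where "P I \<tau> = pd (mechL grr gsr gss V (q \<tau>)) (vector_derivative q (at \<tau>)) I" for I \<tau>
  have Pv: "P I \<tau> = PP grr gsr gss (rpart (q \<tau>)) (vector_derivative q (at \<tau>)) I" for I \<tau>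
    by (simp add: P_def pd_mechL_v[OF sg ss])
  have PT: "P I \<tau> = f (rpart (q \<tau>)) * PP grr gsr gss (rpart (q \<tau>)) (\<omega> \<tau>) I" if "\<tau> \<in> T" for I \<tau>
    by (simp add: Pv vd[OF that] PP_scale)
  have cdiff: "(\<lambda>\<tau>. G (rpart (q \<tau>))) differentiable (at t)" if "t \<in> T" "\<And>y. G differentiable (at y)" for t and G :: "real^'m \<Rightarrow> real"
    by (rule deriv_diff[OF chain_pd[OF that(2) qv[OF that(1)]]])
  have PPd: "(\<lambda>\<tau>. f (rpart (q \<tau>)) * PP grr gsr gss (rpart (q \<tau>)) (\<omega> \<tau>) I) differentiable (at t)" if tT: "t \<in> T" for I t
  proof -
    have w: "(\<lambda>\<tau>. \<omega> \<tau> $ j) differentiable (at t)" for j by (rule nth_diff[OF \<omega>_diff[OF tT]])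
    have c1: "(\<lambda>\<tau>. f (rpart (q \<tau>))) differentiable (at t)" by (rule cdiff[OF tT df])
    have c2: "(\<lambda>\<tau>. grr (rpart (q \<tau>)) \<beta> \<gamma>) differentiable (at t)" for \<beta> \<gamma> by (rule cdiff[OF tT dgrr])
    have c3: "(\<lambda>\<tau>. gsr (rpart (q \<tau>)) a \<beta>) differentiable (at t)" for a \<beta> by (rule cdiff[OF tT dgsr])
    have c4: "(\<lambda>\<tau>. gss (rpart (q \<tau>)) a b) differentiable (at t)" for a b by (rule cdiff[OF tT dgss])
    show ?thesis unfolding PP_def
      by (cases I) (simp_all add: w c1 c2 c3 c4)
  qed
  have Pdiff: "(P I) differentiable (at t)" if tT: "t \<in> T" for I t
  proof -
    obtain D where D: "((\<lambda>\<tau>. f (rpart (q \<tau>)) * PP grr gsr gss (rpart (q \<tau>)) (\<omega> \<tau>) I) has_real_derivative D) (at t)"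
      using PPd[OF tT] DERIV_deriv_iff_real_differentiable by blast
    have "(P I has_real_derivative D) (at t)"
      by (rule has_field_derivative_transform_within_open[OF D T_open tT]) (simp add: PT)
    then show ?thesis by (rule deriv_diff)
  qed

  show ?thesis
  proof (intro ballI conjI allI)
    fix t a assume tT: "t \<in> T"
    show "phi A (q t) (vector_derivative q (at t)) a = 0"
      by (simp add: phi_Phi PhiV[OF tT])
  next
    fix t I assume tT: "t \<in> T"
    show "(\<lambda>\<tau>. pd (mechL grr gsr gss V (q \<tau>)) (vector_derivative q (at \<tau>)) I) differentiable (at t)"
      using Pdiff[OF tT, of I] unfolding P_def .
  next
    fix t \<alpha> assume tT: "t \<in> T"
    show "(deriv (\<lambda>\<tau>. pd (mechL grr gsr gss V (q \<tau>)) (vector_derivative q (at \<tau>)) (Inl \<alpha>)) t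
          - pd (\<lambda>x. mechL grr gsr gss V x (vector_derivative q (at t))) (q t) (Inl \<alpha>))
      - (\<Sum>a\<in>UNIV. A (rpart (q t)) a \<alpha> *
          (deriv (\<lambda>\<tau>. pd (mechL grr gsr gss V (q \<tau>)) (vector_derivative q (at \<tau>)) (Inr a)) t
            - pd (\<lambda>x. mechL grr gsr gss V x (vector_derivative q (at t))) (q t) (Inr a)))
      = 0"
    proof -
    let ?r = "rpart (q t)" and ?c = "f (rpart (q t))" and ?v = "vector_derivative q (at t)" and ?w = "\<omega> t"
    define dc where "dc = (\<Sum>\<beta>\<in>UNIV. pd f ?r \<beta> * ?v $ Inl \<beta>)"
    define dAb where "dAb b = (\<Sum>\<beta>\<in>UNIV. pd (\<lambda>x. A x b \<alpha>) ?r \<beta> * ?v $ Inl \<beta>)" for b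
    define DP where "DP I = deriv (P I) t" for I
    have cD: "((\<lambda>\<tau>. f (rpart (q \<tau>))) has_real_derivative dc) (at t)"
      unfolding dc_def by (rule chain_pd[OF df qv[OF tT]])
    have AD: "((\<lambda>\<tau>. A (rpart (q \<tau>)) b \<alpha>) has_real_derivative dAb b) (at t)" for b
      unfolding dAb_def by (rule chain_pd[OF dA qv[OF tT]])
    have PD: "(P I has_real_derivative DP I) (at t)" for I
      unfolding DP_def using Pdiff[OF tT] DERIV_deriv_iff_real_differentiable by blast
    have QT: "pd (LV grr gsr gss V A f (q \<tau>)) (\<omega> \<tau>) (Inl \<alpha>)
        = f (rpart (q \<tau>)) * (P (Inl \<alpha>) \<tau> - (\<Sum>b\<in>UNIV. A (rpart (q \<tau>)) b \<alpha> * P (Inr b) \<tau>))" if "\<tau> \<in> T" for \<tau>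
    proof -
      have s: "(\<Sum>b\<in>UNIV. PP grr gsr gss (rpart (q \<tau>)) (axis (Inl \<alpha>) 1) (Inr b) * Phi A (rpart (q \<tau>)) (\<omega> \<tau>) b
             + PP grr gsr gss (rpart (q \<tau>)) (\<omega> \<tau>) (Inr b) * Phi A (rpart (q \<tau>)) (axis (Inl \<alpha>) 1) b)
           = (\<Sum>b\<in>UNIV. A (rpart (q \<tau>)) b \<alpha> * PP grr gsr gss (rpart (q \<tau>)) (\<omega> \<tau>) (Inr b))"
        by (simp add: Phi0[OF that] PP_axis_Inl Phi_axis_Inl mult.commute)
      have s2: "(\<Sum>b\<in>UNIV. A (rpart (q \<tau>)) b \<alpha> * P (Inr b) \<tau>)
          = f (rpart (q \<tau>)) * (\<Sum>b\<in>UNIV. A (rpart (q \<tau>)) b \<alpha> * PP grr gsr gss (rpart (q \<tau>)) (\<omega> \<tau>) (Inr b))"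
        by (simp add: PT[OF that] sum_distrib_left mult_ac)
      show ?thesis
        using pd_LV_w[where grr=grr and gss=gss and f=f and gsr=gsr and V=V and A=A and q="q \<tau>" and w="\<omega> \<tau>" and I="Inl \<alpha>", OF sg ss f_nz]
        unfolding s s2 by (simp add: PT[OF that] power2_eq_square algebra_simps)
    qed
    define RHSD where "RHSD = dc * (P (Inl \<alpha>) t - (\<Sum>b\<in>UNIV. A ?r b \<alpha> * P (Inr b) t))
        + ?c * (DP (Inl \<alpha>) - (\<Sum>b\<in>UNIV. dAb b * P (Inr b) t + A ?r b \<alpha> * DP (Inr b)))"
    have RD: "((\<lambda>\<tau>. f (rpart (q \<tau>)) * (P (Inl \<alpha>) \<tau> - (\<Sum>b\<in>UNIV. A (rpart (q \<tau>)) b \<alpha> * P (Inr b) \<tau>))) has_real_derivative RHSD) (at t)"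
    proof -
      have S: "((\<lambda>\<tau>. \<Sum>b\<in>UNIV. A (rpart (q \<tau>)) b \<alpha> * P (Inr b) \<tau>) has_real_derivative
          (\<Sum>b\<in>UNIV. dAb b * P (Inr b) t + A ?r b \<alpha> * DP (Inr b))) (at t)"
        by (rule DERIV_sum, rule DERIV_cong[OF DERIV_mult[OF AD PD]]) (simp add: mult.commute)
      show ?thesis unfolding RHSD_def
        by (rule DERIV_cong[OF DERIV_mult[OF cD DERIV_diff[OF PD S]]]) (simp add: algebra_simps)
    qed
    have QD: "((\<lambda>\<tau>. pd (LV grr gsr gss V A f (q \<tau>)) (\<omega> \<tau>) (Inl \<alpha>)) has_real_derivative RHSD) (at t)"
      by (rule has_field_derivative_transform_within_open[OF RD T_open tT]) (simp add: QT)
    have EQ0: "RHSD = ?c * pd (\<lambda>x. LV grr gsr gss V A f x ?w) (q t) (Inl \<alpha>)"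
      using DERIV_unique[OF QD LV_eqs[OF tT, of "Inl \<alpha>"]] .
    have pdx: "pd (\<lambda>x. LV grr gsr gss V A f x ?w) (q t) (Inl \<alpha>) =
       2 * ?c * pd f ?r \<alpha> * KE grr gsr gss ?r ?w + ?c ^ 2 * dK grr gsr gss ?r \<alpha> ?w
       - pd V ?r \<alpha> - ?c ^ 2 * (\<Sum>b\<in>UNIV. PP grr gsr gss ?r ?w (Inr b) * dPhi A ?r \<alpha> ?w b)"
      by (rule pd_LV_x_Inl[OF sg ss f_nz Phi0[OF tT]])
    have vw: "?v = ?c *\<^sub>R ?w" by (rule vd[OF tT])
    have Pt: "P I t = PP grr gsr gss ?r ?v I" for I by (rule Pv)
    have Jr: "Jv A ?r (rpart ?v) = ?v" by (rule Jv_rpart[OF PhiV[OF tT]])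
    have EQ: "dc * Psi grr gsr gss A ?r ?v \<alpha>
        + ?c * (DP (Inl \<alpha>) - (\<Sum>b\<in>UNIV. dAb b * PP grr gsr gss ?r ?v (Inr b) + A ?r b \<alpha> * DP (Inr b)))
        = 2 * pd f ?r \<alpha> * KE grr gsr gss ?r ?v + ?c * dK grr gsr gss ?r \<alpha> ?v - ?c * pd V ?r \<alpha>
          - ?c * (\<Sum>b\<in>UNIV. PP grr gsr gss ?r ?v (Inr b) * dPhi A ?r \<alpha> ?v b)"
    proof -
      have e1: "(\<Sum>b\<in>UNIV. PP grr gsr gss ?r ?v (Inr b) * dPhi A ?r \<alpha> ?v b)
          = ?c ^ 2 * (\<Sum>b\<in>UNIV. PP grr gsr gss ?r ?w (Inr b) * dPhi A ?r \<alpha> ?w b)"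
        unfolding vw PP_scale dPhi_scale by (simp add: sum_distrib_left power2_eq_square mult_ac)
      have e2: "RHSD = dc * Psi grr gsr gss A ?r ?v \<alpha>
        + ?c * (DP (Inl \<alpha>) - (\<Sum>b\<in>UNIV. dAb b * PP grr gsr gss ?r ?v (Inr b) + A ?r b \<alpha> * DP (Inr b)))"
        unfolding RHSD_def Pt Psi_def ..
      have "RHSD = 2 * pd f ?r \<alpha> * KE grr gsr gss ?r ?v + ?c * dK grr gsr gss ?r \<alpha> ?v - ?c * pd V ?r \<alpha>
          - ?c * (\<Sum>b\<in>UNIV. PP grr gsr gss ?r ?v (Inr b) * dPhi A ?r \<alpha> ?v b)"
        unfolding EQ0 pdx e1 by (simp add: vw KE_scale dK_scale power2_eq_square algebra_simps)
      with e2 show ?thesis by simp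
    qed
    have KG: "(\<Sum>\<mu>\<in>UNIV. Kten grr gsr gss V A ?r \<mu> \<alpha> \<delta> * Gmat grr gsr gss V A ?r $ \<mu> $ \<nu>)
        = (\<Sum>b\<in>UNIV. Mmat gsr gss A ?r b \<nu> * Bcurv A ?r b \<alpha> \<delta>)" for \<delta> \<nu>
      unfolding Kten_def
      by (rule KG_abs[where Gi="\<lambda>\<epsilon> \<mu>. matrix_inv (Gmat grr gsr gss V A ?r) $ \<epsilon> $ \<mu>"
            and G="\<lambda>\<mu> \<nu>. Gmat grr gsr gss V A ?r $ \<mu> $ \<nu>" and B="\<lambda>b. Bcurv A ?r b \<alpha> \<delta>",
            OF inv_left_sum[OF G_inv]])
    have CT: "(\<Sum>\<delta>\<in>UNIV. pd f ?r \<delta> * ?v $ Inl \<delta>) * (\<Sum>\<nu>\<in>UNIV. Gmat grr gsr gss V A ?r $ \<alpha> $ \<nu> * ?v $ Inl \<nu>)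
        - pd f ?r \<alpha> * (\<Sum>\<delta>\<in>UNIV. \<Sum>\<nu>\<in>UNIV. Gmat grr gsr gss V A ?r $ \<delta> $ \<nu> * ?v $ Inl \<delta> * ?v $ Inl \<nu>)
       = ?c * (\<Sum>b\<in>UNIV. (\<Sum>\<nu>\<in>UNIV. Mmat gsr gss A ?r b \<nu> * ?v $ Inl \<nu>) * (\<Sum>\<delta>\<in>UNIV. Bcurv A ?r b \<alpha> \<delta> * ?v $ Inl \<delta>))"
      by (rule contract[where G="\<lambda>\<mu> \<nu>. Gmat grr gsr gss V A ?r $ \<mu> $ \<nu>" and df="pd f ?r"
          and \<alpha>=\<alpha> and c="?c" and K="Kten grr gsr gss V A ?r" and M="Mmat gsr gss A ?r" and B="Bcurv A ?r"
          and u="\<lambda>\<beta>. ?v $ Inl \<beta>", OF f_eq KG])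
    have G1: "(\<Sum>\<nu>\<in>UNIV. Gmat grr gsr gss V A ?r $ \<alpha> $ \<nu> * ?v $ Inl \<nu>) = Psi grr gsr gss A ?r ?v \<alpha>"
      using G_contract1[where grr=grr and gss=gss and gsr=gsr and V=V and A=A and r="?r" and \<alpha>=\<alpha> and u="rpart ?v", OF sg ss] Jr by simp
    have G2: "(\<Sum>\<delta>\<in>UNIV. \<Sum>\<nu>\<in>UNIV. Gmat grr gsr gss V A ?r $ \<delta> $ \<nu> * ?v $ Inl \<delta> * ?v $ Inl \<nu>) = 2 * KE grr gsr gss ?r ?v"
      using G_contract2[where grr=grr and gss=gss and gsr=gsr and V=V and A=A and r="?r" and u="rpart ?v", OF sg ss] Jr by simp
    have M1: "(\<Sum>\<nu>\<in>UNIV. Mmat gsr gss A ?r b \<nu> * ?v $ Inl \<nu>) = PP grr gsr gss ?r ?v (Inr b)" for b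
      using PP_M[where grr=grr and gss=gss and gsr=gsr and A=A and r="?r" and u="rpart ?v" and b=b] Jr by simp
    have B1: "(\<Sum>\<delta>\<in>UNIV. Bcurv A ?r b \<alpha> \<delta> * ?v $ Inl \<delta>) = dAb b - dPhi A ?r \<alpha> ?v b" for b
      by (simp add: Bcurv_def dAb_def dPhi_def left_diff_distrib sum_subtractf)
    have KI: "dc * Psi grr gsr gss A ?r ?v \<alpha> - pd f ?r \<alpha> * (2 * KE grr gsr gss ?r ?v)
        = ?c * (\<Sum>b\<in>UNIV. PP grr gsr gss ?r ?v (Inr b) * (dAb b - dPhi A ?r \<alpha> ?v b))"
      using CT unfolding G1 G2 M1 B1 dc_def .
    have fin: "DP (Inl \<alpha>) - (dK grr gsr gss ?r \<alpha> ?v - pd V ?r \<alpha>) - (\<Sum>b\<in>UNIV. A ?r b \<alpha> * (DP (Inr b) - 0)) = 0"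
      by (rule alg[OF f_nz EQ KI])
    have Pfun: "P I = (\<lambda>\<tau>. pd (mechL grr gsr gss V (q \<tau>)) (vector_derivative q (at \<tau>)) I)" for I
      by (rule ext) (simp add: P_def)
    show ?thesis using fin
      by (simp add: DP_def Pfun pd_mechL_x_Inl pd_mechL_x_Inr)
    qed
  qed
qed

end
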